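(* Let $\Sigma=(X,U,F)$ be a system and $Q\subset X$. If $(\mathcal{A},G)$ is a quasi-invariant-partition of $Q$, then \[\log\rho(W_{\mathcal{A},G})-\log\rho(M_{\mathcal{A},G})\le h_{inv}(\mathcal{A},G)\le\min\{\log\|W_{\mathcal{A},G}\|_\infty,\ \log\rho(W_{\mathcal{A},G})\},\] where $\rho(\cdot)$ denotes the spectral radius. In particular, if $\rho(M_{\mathcal{A},G})=1$, then $h_{inv}(\mathcal{A},G)=\log\rho(W_{\mathcal{A},G})$.
   Context: A system is a triple $\Sigma=(X,U,F)$ where $X,U$ are nonempty sets and $F:X\times U\rightrightarrows X$ is a set-valued map with $F(x,u)\neq\emptyset$ for all $(x,u)$; for $A\subset X$, $F(A,u)=\bigcup_{x\in A}F(x,u)$. An invariant cover of $Q$ is a pair $(\mathcal{A},G)$ where $\mathcal{A}$ is a finite cover of $Q$ (by subsets of $Q$) and $G:\mathcal{A}\to U$ satisfies $F(A,G(A))\subset Q$ for all $A\in\mathcal{A}$. For $\mathcal{S}\subset\mathcal{A}^n$, $\alpha=\alpha(0)\cdots\alpha(n-1)\in\mathcal{S}$ and integer $0\le t<n-1$, let $P(\alpha|_{[0,t]})=\{A\in\mathcal{A}:\exists\hat\alpha\in\mathcal{S},\ \hat\alpha|_{[0,t]}=\alpha|_{[0,t]},\ A=\hat\alpha(t+1)\}$, and $P(\alpha|_{[0,n-1]})=P(\alpha)=\{\hat\alpha(0):\hat\alpha\in\mathcal{S}\}$. $\mathcal{S}$ is $(n,Q)$-spanning in $(\mathcal{A},G)$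 if (1) the elements of $P(\alpha)$ cover $Q$, and (2) for every $\alpha\in\mathcal{S}$ and $0\le t<n-1$, $F(\alpha(t),G(\alpha(t)))\subset\bigcup_{A'\in P(\alpha|_{[0,t]})}A'$. Let $N(\mathcal{S})=\max_{\alpha\in\mathcal{S}}\prod_{t=0}^{n-1}\sharp P(\alpha|_{[0,t]})$, $r_{inv}(n,Q,\mathcal{A},G)=\min\{N(\mathcal{S}):\mathcal{S}\ (n,Q)\text{-spanning in }(\mathcal{A},G)\}$, and $h_{inv}(\mathcal{A},G)=\lim_{n\to\infty}\frac1n\log r_{inv}(n,Q,\mathcal{A},G)$ ($\log$ base $2$). For $A\in\mathcal{A}$: $D(A)=\{A'\in\mathcal{A}:F(A,G(A))\cap A'\neq\emptyset\}$. An invariant cover $(\mathcal{A},G)$ is a quasi-invariant-partition of $Q$ if $A\setminus\bigcup_{B\in\mathcal{A},B\neq A}B\neq\emptyset$ for all $A\in\mathcal{A}$, and $F(A,G(A))\cap\big(B\setminus\bigcup_{C\in D(A),C\neq B}C\big)\neq\emptyset$ for all $A\in\mathcal{A}$ and $B\in D(A)$. The adjacency matrix $M_{\mathcal{A},G}=(M_{AB})_{A,B\in\mathcal{A}}$ has $M_{AB}=1$ if $F(A,G(A))\cap B\neq\emptyset$ and $0$ otherwise; the weighted adjacency matrix $W_{\mathcal{A},G}=(W_{AB})_{A,B\in\mathcal{A}}$ has $W_{AB}=\sharp D(A)$ if $F(A,G(A))\cap B\neq\emptyset$ and $0$ otherwise. For a square matrix $M=(a_{ij})$, $\|M\|_\infty=\max_{i,j}|a_{ij}|$.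 *)

theory Defs
  imports "HOL-Analysis.Analysis"
begin

text \<open>A system (X,U,F) is modelled with X = UNIV :: 'x set, U = UNIV :: 'u set,
  F :: 'x \<Rightarrow> 'u \<Rightarrow> 'x set.\<close>

definition Fset :: "('x \<Rightarrow> 'u \<Rightarrow> 'x set) \<Rightarrow> 'x set \<Rightarrow> 'u \<Rightarrow> 'x set" where
  "Fset F A u = (\<Union>x\<in>A. F x u)"

definition invariant_cover ::
  "('x \<Rightarrow> 'u \<Rightarrow> 'x set) \<Rightarrow> 'x set \<Rightarrow> 'x set set \<Rightarrow> ('x set \<Rightarrow> 'u) \<Rightarrow> bool" where
  "invariant_cover F Q \<A> G \<longleftrightarrow>
     finite \<A> \<and> (\<forall>A\<in>\<A>. A \<subseteq> Q) \<and> Q \<subseteq> \<Union>\<A> \<and>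
     (\<forall>A\<in>\<A>. Fset F A (G A) \<subseteq> Q)"

text \<open>P(alpha|[0,t]) for S a set of words of length n over the cover (words = lists).\<close>
definition Pset :: "'a list set \<Rightarrow> nat \<Rightarrow> 'a list \<Rightarrow> nat \<Rightarrow> 'a set" where
  "Pset S n \<alpha> t =
     (if t < n - 1
      then {\<beta> ! (t+1) | \<beta>. \<beta> \<in> S \<and> take (t+1) \<beta> = take (t+1) \<alpha>}
      else {\<beta> ! 0 | \<beta>. \<beta> \<in> S})"

definition spanning ::
  "('x \<Rightarrow> 'u \<Rightarrow> 'x set) \<Rightarrow> 'x set \<Rightarrow> 'x set set \<Rightarrow> ('x set \<Rightarrow> 'u)
     \<Rightarrow> nat \<Rightarrow> 'x set list set \<Rightarrow> bool" where
  "spanning F Q \<A> G n S \<longleftrightarrow>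
     S \<subseteq> {\<alpha>. length \<alpha> = n \<and> set \<alpha> \<subseteq> \<A>} \<and>
     Q \<subseteq> \<Union>{\<beta> ! 0 | \<beta>. \<beta> \<in> S} \<and>
     (\<forall>\<alpha>\<in>S. \<forall>t. t < n - 1 \<longrightarrow>
        Fset F (\<alpha> ! t) (G (\<alpha> ! t)) \<subseteq> \<Union>(Pset S n \<alpha> t))"

definition Nval :: "'a list set \<Rightarrow> nat \<Rightarrow> nat" where
  "Nval S n = Max {(\<Prod>t<n. card (Pset S n \<alpha> t)) | \<alpha>. \<alpha> \<in> S}"

definition r_inv ::
  "('x \<Rightarrow> 'u \<Rightarrow> 'x set) \<Rightarrow> 'x set \<Rightarrow> 'x set set \<Rightarrow> ('x set \<Rightarrow> 'u) \<Rightarrow> nat \<Rightarrow> nat" where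
  "r_inv F Q \<A> G n = Min {Nval S n | S. spanning F Q \<A> G n S}"

definition h_inv_seq ::
  "('x \<Rightarrow> 'u \<Rightarrow> 'x set) \<Rightarrow> 'x set \<Rightarrow> 'x set set \<Rightarrow> ('x set \<Rightarrow> 'u) \<Rightarrow> nat \<Rightarrow> real" where
  "h_inv_seq F Q \<A> G n = log 2 (real (r_inv F Q \<A> G n)) / real n"

definition h_inv ::
  "('x \<Rightarrow> 'u \<Rightarrow> 'x set) \<Rightarrow> 'x set \<Rightarrow> 'x set set \<Rightarrow> ('x set \<Rightarrow> 'u) \<Rightarrow> real" where
  "h_inv F Q \<A> G = lim (h_inv_seq F Q \<A> G)"

definition Dset ::
  "('x \<Rightarrow> 'u \<Rightarrow> 'x set) \<Rightarrow> 'x set set \<Rightarrow> ('x set \<Rightarrow> 'u) \<Rightarrow> 'x set \<Rightarrow> 'x set set" where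
  "Dset F \<A> G A = {A'\<in>\<A>. Fset F A (G A) \<inter> A' \<noteq> {}}"

definition quasi_invariant_partition ::
  "('x \<Rightarrow> 'u \<Rightarrow> 'x set) \<Rightarrow> 'x set \<Rightarrow> 'x set set \<Rightarrow> ('x set \<Rightarrow> 'u) \<Rightarrow> bool" where
  "quasi_invariant_partition F Q \<A> G \<longleftrightarrow>
     invariant_cover F Q \<A> G \<and>
     (\<forall>A\<in>\<A>. A - \<Union>{B\<in>\<A>. B \<noteq> A} \<noteq> {}) \<and>
     (\<forall>A\<in>\<A>. \<forall>B\<in>Dset F \<A> G A.
        Fset F A (G A) \<inter> (B - \<Union>{C\<in>Dset F \<A> G A. C \<noteq> B}) \<noteq> {})"

definition adj_matrix ::
  "('x \<Rightarrow> 'u \<Rightarrow> 'x set) \<Rightarrow> ('x set \<Rightarrow> 'u) \<Rightarrow> 'x set \<Rightarrow> 'x set \<Rightarrow> real" where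
  "adj_matrix F G A B = (if Fset F A (G A) \<inter> B \<noteq> {} then 1 else 0)"

definition wadj_matrix ::
  "('x \<Rightarrow> 'u \<Rightarrow> 'x set) \<Rightarrow> 'x set set \<Rightarrow> ('x set \<Rightarrow> 'u) \<Rightarrow> 'x set \<Rightarrow> 'x set \<Rightarrow> real" where
  "wadj_matrix F \<A> G A B =
     (if Fset F A (G A) \<inter> B \<noteq> {} then real (card (Dset F \<A> G A)) else 0)"

definition is_eigenvalue :: "'i set \<Rightarrow> ('i \<Rightarrow> 'i \<Rightarrow> real) \<Rightarrow> complex \<Rightarrow> bool" where
  "is_eigenvalue I M c \<longleftrightarrow>
     (\<exists>v :: 'i \<Rightarrow> complex. (\<exists>i\<in>I. v i \<noteq> 0) \<and>
        (\<forall>i\<in>I. (\<Sum>j\<in>I. complex_of_real (M i j) * v j) = c * v i))"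

definition spectral_radius :: "'i set \<Rightarrow> ('i \<Rightarrow> 'i \<Rightarrow> real) \<Rightarrow> real" where
  "spectral_radius I M = Max {cmod c | c. is_eigenvalue I M c}"

definition max_norm :: "'i set \<Rightarrow> ('i \<Rightarrow> 'i \<Rightarrow> real) \<Rightarrow> real" where
  "max_norm I M = Max {\<bar>M i j\<bar> | i j. i \<in> I \<and> j \<in> I}"

end

theory Submission imports Defs "Jordan_Normal_Form.Jordan_Normal_Form_Existence" "HOL-Real_Asymp.Real_Asymp" begin

primrec mpow :: "'i set \<Rightarrow> ('i \<Rightarrow> 'i \<Rightarrow> real) \<Rightarrow> nat \<Rightarrow> 'i \<Rightarrow> 'i \<Rightarrow> real" where
  "mpow I M 0 = (\<lambda>i j. if i = j then 1 else 0)"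
| "mpow I M (Suc k) = (\<lambda>i j. \<Sum>l\<in>I. mpow I M k i l * M l j)"

lemma mpow_Suc':
  assumes fin: "finite I" and i: "i \<in> I" and j: "j \<in> I"
  shows "mpow I M (Suc k) i j = (\<Sum>l\<in>I. M i l * mpow I M k l j)"
  using i j
proof (induction k arbitrary: i j)
  case 0
  have "(\<Sum>l\<in>I. (if i = l then 1 else 0) * M l j) = M i j"
  proof -
    have "(\<Sum>l\<in>I. (if i = l then 1 else 0) * M l j) = (\<Sum>l\<in>I. if i = l then M l j else 0)"
      by (rule sum.cong) auto
    then show ?thesis using 0 fin by (simp add: sum.delta)
  qed
  moreover have "(\<Sum>l\<in>I. M i l * (if l = j then 1 else 0)) = M i j"
  proof -
    have "(\<Sum>l\<in>I. M i l * (if l = j then 1 else 0)) = (\<Sum>l\<in>I. if l = j then M i l else 0)"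
      by (rule sum.cong) auto
    then show ?thesis using 0 fin by (simp add: sum.delta')
  qed
  ultimately show ?case by simp
next
  case (Suc k)
  have "mpow I M (Suc (Suc k)) i j = (\<Sum>l\<in>I. mpow I M (Suc k) i l * M l j)" by simp
  also have "\<dots> = (\<Sum>l\<in>I. (\<Sum>m\<in>I. M i m * mpow I M k m l) * M l j)"
    using Suc by (intro sum.cong) auto
  also have "\<dots> = (\<Sum>m\<in>I. M i m * (\<Sum>l\<in>I. mpow I M k m l * M l j))"
  proof -
    have "(\<Sum>l\<in>I. (\<Sum>m\<in>I. M i m * mpow I M k m l) * M l j) = (\<Sum>l\<in>I. \<Sum>m\<in>I. M i m * (mpow I M k m l * M l j))"
      by (simp add: sum_distrib_right mult.assoc)
    also have "\<dots> = (\<Sum>m\<in>I. \<Sum>l\<in>I. M i m * (mpow I M k m l * M l j))"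
      by (rule sum.swap)
    also have "\<dots> = (\<Sum>m\<in>I. M i m * (\<Sum>l\<in>I. mpow I M k m l * M l j))"
      by (simp add: sum_distrib_left)
    finally show ?thesis .
  qed
  also have "\<dots> = (\<Sum>m\<in>I. M i m * mpow I M (Suc k) m j)" by simp
  finally show ?case .
qed

lemma mpow_nonneg:
  assumes "\<And>i j. i \<in> I \<Longrightarrow> j \<in> I \<Longrightarrow> M i j \<ge> 0" "i \<in> I" "j \<in> I"
  shows "mpow I M k i j \<ge> 0"
  using assms(2,3)
proof (induction k arbitrary: j)
  case (Suc k) then show ?case using assms(1) by (auto intro!: sum_nonneg)
qed simp

lemma mpow_scale:
  assumes "r \<noteq> 0"
  shows "mpow I (\<lambda>x y. M x y / r) k i j = mpow I M k i j / r ^ k"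
proof (induction k arbitrary: j)
  case (Suc k) then show ?case by (simp add: sum_divide_distrib mult.commute)
qed simp

definition Tm :: "nat \<Rightarrow> (nat \<Rightarrow> 'i) \<Rightarrow> ('i \<Rightarrow> 'i \<Rightarrow> real) \<Rightarrow> complex mat" where
  "Tm N e M = mat N N (\<lambda>(i,j). complex_of_real (M (e i) (e j)))"

lemma Tm_carrier: "Tm N e M \<in> carrier_mat N N" by (simp add: Tm_def)

lemma Tm_pow:
  assumes bij: "bij_betw e {0..<N} I"
  shows "Tm N e M ^\<^sub>m k = Tm N e (mpow I M k)"
proof (induction k)
  case 0
  have inj: "inj_on e {0..<N}" using bij bij_betw_def by blast
  show ?case
    by (rule eq_matI) (auto simp: Tm_def inj_on_eq_iff[OF inj])
next
  case (Suc k)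
  show ?case
  proof (rule eq_matI)
    fix i j assume i: "i < dim_row (Tm N e (mpow I M (Suc k)))" and j: "j < dim_col (Tm N e (mpow I M (Suc k)))"
    then have i': "i < N" and j': "j < N" by (auto simp: Tm_def)
    have "(Tm N e M ^\<^sub>m Suc k) $$ (i, j) = (Tm N e (mpow I M k) * Tm N e M) $$ (i,j)"
      using Suc by simp
    also have "\<dots> = (\<Sum>l = 0..<N. complex_of_real (mpow I M k (e i) (e l)) * complex_of_real (M (e l) (e j)))"
      using i' j' by (simp add: Tm_def scalar_prod_def)
    also have "\<dots> = complex_of_real (\<Sum>l = 0..<N. mpow I M k (e i) (e l) * M (e l) (e j))"
      by simp
    also have "(\<Sum>l = 0..<N. mpow I M k (e i) (e l) * M (e l) (e j)) = (\<Sum>x\<in>I. mpow I M k (e i) x * M x (e j))"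
      using sum.reindex_bij_betw[OF bij, of "\<lambda>x. mpow I M k (e i) x * M x (e j)"] by simp
    finally show "(Tm N e M ^\<^sub>m Suc k) $$ (i, j) = Tm N e (mpow I M (Suc k)) $$ (i, j)"
      using i' j' by (simp add: Tm_def)
  qed (auto simp: Tm_def)
qed

lemma Tm_eigen:
  assumes bij: "bij_betw e {0..<N} I"
  shows "eigenvalue (Tm N e M) c \<longleftrightarrow> is_eigenvalue I M c"
proof
  assume "eigenvalue (Tm N e M) c"
  then obtain v where v: "v \<in> carrier_vec N" "v \<noteq> 0\<^sub>v N" "Tm N e M *\<^sub>v v = c \<cdot>\<^sub>v v"
    unfolding eigenvalue_def eigenvector_def by (auto simp: Tm_def)
  define u where "u x = v $ (inv_into {0..<N} e x)" for x
  have ue: "u (e i) = v $ i" if "i < N" for i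
    using that bij unfolding u_def by (simp add: bij_betw_inv_into_left)
  have "\<exists>i<N. v $ i \<noteq> 0"
  proof (rule ccontr)
    assume "\<not> (\<exists>i<N. v $ i \<noteq> 0)"
    then have "v = 0\<^sub>v N" using v(1) by (intro eq_vecI) auto
    with v(2) show False by simp
  qed
  then obtain i where i: "i < N" "v $ i \<noteq> 0" by blast
  show "is_eigenvalue I M c"
    unfolding is_eigenvalue_def
  proof (intro exI conjI)
    show "\<exists>i\<in>I. u i \<noteq> 0"
      using i ue bij by (intro bexI[of _ "e i"]) (auto simp: bij_betw_def)
    show "\<forall>x\<in>I. (\<Sum>j\<in>I. complex_of_real (M x j) * u j) = c * u x"
    proof
      fix x assume x: "x \<in> I"
      have "x \<in> e ` {0..<N}" using x bij_betw_imp_surj_on[OF bij] by simp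
      then obtain i where i: "i < N" "x = e i" by auto
      have "(\<Sum>j\<in>I. complex_of_real (M x j) * u j) = (\<Sum>l = 0..<N. complex_of_real (M x (e l)) * u (e l))"
        using sum.reindex_bij_betw[OF bij, of "\<lambda>j. complex_of_real (M x j) * u j"] by simp
      also have "\<dots> = (\<Sum>l = 0..<N. complex_of_real (M x (e l)) * v $ l)"
        by (intro sum.cong) (auto simp: ue)
      also have "\<dots> = (Tm N e M *\<^sub>v v) $ i"
        using i v(1) by (simp add: Tm_def scalar_prod_def)
      also have "\<dots> = c * u x" using v(3) i v(1) ue by simp
      finally show "(\<Sum>j\<in>I. complex_of_real (M x j) * u j) = c * u x" .
    qed
  qed
next
  assume "is_eigenvalue I M c"
  then obtain u where u: "\<exists>i\<in>I. u i \<noteq> 0" "\<forall>i\<in>I. (\<Sum>j\<in>I. complex_of_real (M i j) * u j) = c * u i"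
    unfolding is_eigenvalue_def by blast
  define v where "v = vec N (\<lambda>i. u (e i))"
  have "eigenvector (Tm N e M) v c"
    unfolding eigenvector_def
  proof (intro conjI)
    show "v \<in> carrier_vec (dim_row (Tm N e M))" by (simp add: v_def Tm_def)
    from u(1) obtain x where x: "x \<in> I" "u x \<noteq> 0" by blast
    have "x \<in> e ` {0..<N}" using x bij_betw_imp_surj_on[OF bij] by simp
    then obtain i where i: "i < N" "x = e i" by auto
    show "v \<noteq> 0\<^sub>v (dim_row (Tm N e M))"
    proof
      assume "v = 0\<^sub>v (dim_row (Tm N e M))"
      then have "v $ i = 0" using i by (simp add: Tm_def)
      then show False using x i by (simp add: v_def)
    qed
    show "Tm N e M *\<^sub>v v = c \<cdot>\<^sub>v v"
    proof (rule eq_vecI)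
      fix i assume "i < dim_vec (c \<cdot>\<^sub>v v)"
      then have i: "i < N" by (simp add: v_def)
      have ei: "e i \<in> I" using bij i by (auto simp: bij_betw_def)
      have "(Tm N e M *\<^sub>v v) $ i = (\<Sum>l = 0..<N. complex_of_real (M (e i) (e l)) * u (e l))"
        using i by (simp add: Tm_def v_def scalar_prod_def)
      also have "\<dots> = (\<Sum>j\<in>I. complex_of_real (M (e i) j) * u j)"
        using sum.reindex_bij_betw[OF bij, of "\<lambda>j. complex_of_real (M (e i) j) * u j"] by simp
      also have "\<dots> = c * u (e i)" using u(2) ei by blast
      finally show "(Tm N e M *\<^sub>v v) $ i = (c \<cdot>\<^sub>v v) $ i" using i by (simp add: v_def)
    qed (simp add: Tm_def v_def)
  qed
  then show "eigenvalue (Tm N e M) c" unfolding eigenvalue_def by blast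
qed


lemma jnf_bound:
  fixes A :: "complex mat"
  assumes A: "A \<in> carrier_mat n n"
    and ev: "\<And>c. eigenvalue A c \<Longrightarrow> norm c \<le> 1"
  shows "\<exists>c1 c2. \<forall>k. norm_bound (A ^\<^sub>m k) (c1 + c2 * of_nat k ^ (n - 1))"
proof -
  obtain as where cA: "char_poly A = (\<Prod>a\<leftarrow>as. [:- a, 1:])" and len: "length as = n"
    using char_poly_factorized[OF A] by blast
  show ?thesis
  proof (rule factored_char_poly_norm_bound[OF A cA jordan_nf_exists[OF A cA]])
    fix a assume a: "a \<in> set as"
    have "poly (char_poly A) a = 0" unfolding cA using a by (rule linear_poly_root)
    then have "eigenvalue A a" using eigenvalue_root_char_poly[OF A] by simp
    then show "norm a \<le> 1" by (rule ev)
    show "length (filter ((=) a) as) \<le> n" using len by (metis length_filter_le)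
  qed
qed

lemma eig_finite_ne:
  fixes A :: "complex mat"
  assumes A: "A \<in> carrier_mat n n" and n: "n > 0"
  shows "finite {c. eigenvalue A c}" "{c. eigenvalue A c} \<noteq> {}"
proof -
  have id: "{c. eigenvalue A c} = {c. poly (char_poly A) c = 0}"
    using eigenvalue_root_char_poly[OF A] by auto
  from degree_monic_char_poly[OF A] have d: "degree (char_poly A) = n" and c: "coeff (char_poly A) n = 1"
    by auto
  from c have nz: "char_poly A \<noteq> 0" by auto
  show "finite {c. eigenvalue A c}" unfolding id using poly_roots_finite[OF nz] .
  have "\<not> constant (poly (char_poly A))" using d n by (simp add: constant_degree)
  from fundamental_theorem_of_algebra[OF this] show "{c. eigenvalue A c} \<noteq> {}" unfolding id by auto
qed

lemma sr_facts:
  fixes M :: "'i \<Rightarrow> 'i \<Rightarrow> real"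
  assumes fin: "finite I" and ne: "I \<noteq> {}"
  shows "\<exists>c. is_eigenvalue I M c \<and> cmod c = spectral_radius I M"
    and "is_eigenvalue I M c \<Longrightarrow> cmod c \<le> spectral_radius I M"
proof -
  obtain e where bij: "bij_betw e {0..<card I} I" using ex_bij_betw_nat_finite[OF fin] by blast
  have N: "card I > 0" using fin ne by (simp add: card_gt_0_iff)
  have id: "{c. is_eigenvalue I M c} = {c. eigenvalue (Tm (card I) e M) c}"
    using Tm_eigen[OF bij] by auto
  note fe = eig_finite_ne[OF Tm_carrier N, of e M, folded id]
  have sid: "{cmod c | c. is_eigenvalue I M c} = cmod ` {c. is_eigenvalue I M c}" by auto
  have f2: "finite {cmod c | c. is_eigenvalue I M c}" unfolding sid using fe(1) by simp
  have n2: "{cmod c | c. is_eigenvalue I M c} \<noteq> {}" unfolding sid using fe(2) by simp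
  from Max_in[OF f2 n2] show "\<exists>c. is_eigenvalue I M c \<and> cmod c = spectral_radius I M"
    unfolding spectral_radius_def by auto
  assume "is_eigenvalue I M c"
  then show "cmod c \<le> spectral_radius I M"
    unfolding spectral_radius_def using f2 by (intro Max_ge) auto
qed

lemma growth:
  fixes M :: "'i \<Rightarrow> 'i \<Rightarrow> real"
  assumes fin: "finite I" and ne: "I \<noteq> {}" and r: "r > 0"
    and ev: "\<And>c. is_eigenvalue I M c \<Longrightarrow> cmod c \<le> r"
  shows "\<exists>E>0. \<forall>k. \<forall>i\<in>I. \<forall>j\<in>I. \<bar>mpow I M k i j\<bar> \<le> E * (real k + 1) ^ (card I - 1) * r ^ k"
proof -
  obtain e where bij: "bij_betw e {0..<card I} I" using ex_bij_betw_nat_finite[OF fin] by blast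
  define N where "N = card I"
  define M' where "M' = (\<lambda>x y. M x y / r)"
  define A where "A = Tm N e M'"
  have A: "A \<in> carrier_mat N N" unfolding A_def by (rule Tm_carrier)
  have evA: "norm c \<le> 1" if "eigenvalue A c" for c
  proof -
    have "is_eigenvalue I M' c" using that Tm_eigen[OF bij[folded N_def]] unfolding A_def by blast
    then obtain u where u: "\<exists>i\<in>I. u i \<noteq> 0" "\<forall>i\<in>I. (\<Sum>j\<in>I. complex_of_real (M' i j) * u j) = c * u i"
      unfolding is_eigenvalue_def by blast
    have "is_eigenvalue I M (complex_of_real r * c)"
      unfolding is_eigenvalue_def
    proof (intro exI conjI)
      show "\<exists>i\<in>I. u i \<noteq> 0" by (rule u(1))
      show "\<forall>i\<in>I. (\<Sum>j\<in>I. complex_of_real (M i j) * u j) = complex_of_real r * c * u i"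
      proof
        fix i assume i: "i \<in> I"
        have "(\<Sum>j\<in>I. complex_of_real (M i j) * u j) = complex_of_real r * (\<Sum>j\<in>I. complex_of_real (M' i j) * u j)"
          using r by (simp add: sum_distrib_left M'_def)
        also have "\<dots> = complex_of_real r * c * u i" using u(2) i by simp
        finally show "(\<Sum>j\<in>I. complex_of_real (M i j) * u j) = complex_of_real r * c * u i" .
      qed
    qed
    then have "cmod (complex_of_real r * c) \<le> r" by (rule ev)
    then have "r * cmod c \<le> r * 1" using r by (simp add: norm_mult)
    then show ?thesis using r by simp
  qed
  obtain c1 c2 where cb: "\<And>k. norm_bound (A ^\<^sub>m k) (c1 + c2 * of_nat k ^ (N - 1))"
    using jnf_bound[OF A evA] by blast
  define E where "E = \<bar>c1\<bar> + \<bar>c2\<bar> + 1"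
  have E: "E > 0" unfolding E_def by simp
  have "\<forall>k. \<forall>i\<in>I. \<forall>j\<in>I. \<bar>mpow I M k i j\<bar> \<le> E * (real k + 1) ^ (N - 1) * r ^ k"
  proof (intro allI ballI)
    fix k x y assume x: "x \<in> I" and y: "y \<in> I"
    have "x \<in> e ` {0..<N}" using x bij_betw_imp_surj_on[OF bij] N_def by simp
    then obtain i where i: "i < N" "x = e i" by auto
    have "y \<in> e ` {0..<N}" using y bij_betw_imp_surj_on[OF bij] N_def by simp
    then obtain j where j: "j < N" "y = e j" by auto
    have "(A ^\<^sub>m k) $$ (i, j) = Tm N e (mpow I M' k) $$ (i, j)"
      unfolding A_def using Tm_pow[OF bij[folded N_def]] by simp
    also have "\<dots> = complex_of_real (mpow I M k x y / r ^ k)"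
      using i j r unfolding M'_def by (simp add: Tm_def mpow_scale)
    finally have eq: "(A ^\<^sub>m k) $$ (i, j) = complex_of_real (mpow I M k x y / r ^ k)" .
    have "norm ((A ^\<^sub>m k) $$ (i, j)) \<le> c1 + c2 * of_nat k ^ (N - 1)"
      using cb[of k] i j A unfolding norm_bound_def by auto
    then have le1: "\<bar>mpow I M k x y\<bar> / r ^ k \<le> c1 + c2 * real k ^ (N - 1)"
    proof -
      have "norm ((A ^\<^sub>m k) $$ (i, j)) = \<bar>mpow I M k x y / r ^ k\<bar>" unfolding eq norm_of_real ..
      also have "\<dots> = \<bar>mpow I M k x y\<bar> / r ^ k" using r by (simp add: abs_divide)
      finally show ?thesis using \<open>norm ((A ^\<^sub>m k) $$ (i, j)) \<le> c1 + c2 * of_nat k ^ (N - 1)\<close> by simp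
    qed
    have "c1 + c2 * real k ^ (N - 1) \<le> \<bar>c1\<bar> + \<bar>c2\<bar> * real k ^ (N - 1)"
    proof -
      have "c2 * real k ^ (N - 1) \<le> \<bar>c2\<bar> * real k ^ (N - 1)" by (rule mult_right_mono) auto
      then show ?thesis by linarith
    qed
    also have "\<dots> \<le> \<bar>c1\<bar> * (real k + 1) ^ (N - 1) + \<bar>c2\<bar> * (real k + 1) ^ (N - 1) + (real k + 1) ^ (N - 1)"
    proof -
      have "1 \<le> (real k + 1) ^ (N - 1)" by (simp add: one_le_power)
      moreover have "real k ^ (N - 1) \<le> (real k + 1) ^ (N - 1)" by (intro power_mono) auto
      moreover have "\<bar>c1\<bar> * 1 \<le> \<bar>c1\<bar> * (real k + 1) ^ (N - 1)"
        using \<open>1 \<le> (real k + 1) ^ (N - 1)\<close> by (intro mult_left_mono) auto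
      moreover have "\<bar>c2\<bar> * real k ^ (N - 1) \<le> \<bar>c2\<bar> * (real k + 1) ^ (N - 1)"
        using \<open>real k ^ (N - 1) \<le> (real k + 1) ^ (N - 1)\<close> by (intro mult_left_mono) auto
      ultimately show ?thesis by linarith
    qed
    also have "\<dots> = E * (real k + 1) ^ (N - 1)" unfolding E_def by (simp add: algebra_simps)
    finally have "\<bar>mpow I M k x y\<bar> / r ^ k \<le> E * (real k + 1) ^ (N - 1)" using le1 by linarith
    then show "\<bar>mpow I M k x y\<bar> \<le> E * (real k + 1) ^ (N - 1) * r ^ k"
      using r by (simp add: divide_le_eq)
  qed
  then show ?thesis using E unfolding N_def by blast
qed


lemma eig_lower:
  fixes M :: "'i \<Rightarrow> 'i \<Rightarrow> real"
  assumes fin: "finite I" and nn: "\<And>i j. i \<in> I \<Longrightarrow> j \<in> I \<Longrightarrow> M i j \<ge> 0"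
    and ev: "is_eigenvalue I M c"
  shows "\<exists>i\<in>I. \<forall>k. cmod c ^ k \<le> (\<Sum>j\<in>I. mpow I M k i j)"
proof -
  obtain u where u: "\<exists>i\<in>I. u i \<noteq> 0" "\<And>i. i\<in>I \<Longrightarrow> (\<Sum>j\<in>I. complex_of_real (M i j) * u j) = c * u i"
    using ev unfolding is_eigenvalue_def by blast
  have pow: "(\<Sum>j\<in>I. complex_of_real (mpow I M k i j) * u j) = c ^ k * u i" if "i \<in> I" for k i
    using that
  proof (induction k arbitrary: i)
    case 0
    have "(\<Sum>j\<in>I. complex_of_real (mpow I M 0 i j) * u j) = (\<Sum>j\<in>I. if i = j then u j else 0)"
      by (rule sum.cong) auto
    also have "\<dots> = u i" using 0 fin by (simp add: sum.delta)
    finally show ?case by simp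
  next
    case (Suc k)
    have "(\<Sum>j\<in>I. complex_of_real (mpow I M (Suc k) i j) * u j)
        = (\<Sum>j\<in>I. \<Sum>l\<in>I. complex_of_real (mpow I M k i l) * (complex_of_real (M l j) * u j))"
      by (simp add: sum_distrib_right mult.assoc)
    also have "\<dots> = (\<Sum>l\<in>I. \<Sum>j\<in>I. complex_of_real (mpow I M k i l) * (complex_of_real (M l j) * u j))"
      by (rule sum.swap)
    also have "\<dots> = (\<Sum>l\<in>I. complex_of_real (mpow I M k i l) * (\<Sum>j\<in>I. complex_of_real (M l j) * u j))"
      by (simp add: sum_distrib_left)
    also have "\<dots> = (\<Sum>l\<in>I. complex_of_real (mpow I M k i l) * (c * u l))"
      using u(2) by (intro sum.cong) auto
    also have "\<dots> = c * (\<Sum>l\<in>I. complex_of_real (mpow I M k i l) * u l)"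
      by (simp add: sum_distrib_left algebra_simps)
    also have "\<dots> = c ^ Suc k * u i" using Suc by simp
    finally show ?case .
  qed
  have ne: "(\<lambda>i. cmod (u i)) ` I \<noteq> {}" using u(1) by auto
  obtain i0 where i0: "i0 \<in> I" "cmod (u i0) = Max ((\<lambda>i. cmod (u i)) ` I)"
    using Max_in[OF finite_imageI[OF fin] ne] by auto
  have mx: "cmod (u i) \<le> cmod (u i0)" if "i \<in> I" for i
    using i0(2) fin that by simp
  have pos: "cmod (u i0) > 0"
  proof -
    obtain i where "i \<in> I" "u i \<noteq> 0" using u(1) by blast
    moreover from \<open>u i \<noteq> 0\<close> have "0 < cmod (u i)" by simp
    ultimately show ?thesis using mx[of i] by linarith
  qed
  show ?thesis
  proof (intro bexI[OF _ i0(1)] allI)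
    fix k
    have "cmod c ^ k * cmod (u i0) = cmod (\<Sum>j\<in>I. complex_of_real (mpow I M k i0 j) * u j)"
      using pow[OF i0(1), of k] by (simp add: norm_mult norm_power)
    also have "\<dots> \<le> (\<Sum>j\<in>I. cmod (complex_of_real (mpow I M k i0 j) * u j))"
      by (rule norm_sum)
    also have "\<dots> = (\<Sum>j\<in>I. mpow I M k i0 j * cmod (u j))"
      using mpow_nonneg[OF nn i0(1)] by (intro sum.cong) (auto simp: norm_mult)
    also have "\<dots> \<le> (\<Sum>j\<in>I. mpow I M k i0 j * cmod (u i0))"
      using mpow_nonneg[OF nn i0(1)] mx by (intro sum_mono mult_left_mono) auto
    also have "\<dots> = (\<Sum>j\<in>I. mpow I M k i0 j) * cmod (u i0)"
      by (simp add: sum_distrib_right)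
    finally show "cmod c ^ k \<le> (\<Sum>j\<in>I. mpow I M k i0 j)"
      using pos by simp
  qed
qed

lemma rowsum_Suc:
  assumes fin: "finite I" and i: "i \<in> I"
  shows "(\<Sum>j\<in>I. mpow I M (Suc k) i j) = (\<Sum>l\<in>I. M i l * (\<Sum>j\<in>I. mpow I M k l j))"
proof -
  have "(\<Sum>j\<in>I. mpow I M (Suc k) i j) = (\<Sum>j\<in>I. \<Sum>l\<in>I. M i l * mpow I M k l j)"
    using mpow_Suc'[OF fin i] by (intro sum.cong) auto
  also have "\<dots> = (\<Sum>l\<in>I. \<Sum>j\<in>I. M i l * mpow I M k l j)" by (rule sum.swap)
  also have "\<dots> = (\<Sum>l\<in>I. M i l * (\<Sum>j\<in>I. mpow I M k l j))" by (simp add: sum_distrib_left)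
  finally show ?thesis .
qed

lemma rowsum_0:
  assumes fin: "finite I" and i: "i \<in> I"
  shows "(\<Sum>j\<in>I. mpow I M 0 i j) = 1"
proof -
  have "(\<Sum>j\<in>I. mpow I M 0 i j) = (\<Sum>j\<in>I. if i = j then 1 else 0)" by simp
  also have "\<dots> = 1" using fin i by (simp add: sum.delta)
  finally show ?thesis .
qed

lemma poly_geom_lim:
  fixes r :: real
  assumes r0: "0 \<le> r" and r1: "r < 1"
  shows "(\<lambda>k. (real k + 1) ^ m * r ^ k) \<longlonglongrightarrow> 0"
proof -
  define s where "s = root (Suc m) r"
  have s0: "0 \<le> s" unfolding s_def using r0 by simp
  have s1: "s < 1" unfolding s_def using r1 by simp
  have sr: "s ^ Suc m = r" unfolding s_def by (rule real_root_pow_pos2) (use r0 in auto)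
  have eq: "(real k + 1) ^ m * r ^ k = ((real k + 1) * s ^ k) ^ m * s ^ k" for k
  proof -
    have "r ^ k = (s ^ k) ^ m * s ^ k"
      unfolding sr[symmetric] by (simp add: power_mult[symmetric] power_add[symmetric] algebra_simps)
    then show ?thesis by (simp add: power_mult_distrib)
  qed
  have "(\<lambda>k. real k * s ^ k) \<longlonglongrightarrow> 0"
    using powser_times_n_limit_0[of s] s0 s1 by simp
  moreover have "(\<lambda>k. s ^ k) \<longlonglongrightarrow> 0" using s0 s1 by (intro LIMSEQ_power_zero) simp
  ultimately have "(\<lambda>k. real k * s ^ k + s ^ k) \<longlonglongrightarrow> 0 + 0" by (rule tendsto_add)
  then have a: "(\<lambda>k. (real k + 1) * s ^ k) \<longlonglongrightarrow> 0" by (simp add: algebra_simps)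
  have "(\<lambda>k. ((real k + 1) * s ^ k) ^ m * s ^ k) \<longlonglongrightarrow> 0 ^ m * 0"
    by (intro tendsto_mult tendsto_power a) (use s0 s1 in \<open>intro LIMSEQ_power_zero, simp\<close>)
  then show ?thesis unfolding eq by simp
qed

lemma sr_ge1:
  fixes M :: "'i \<Rightarrow> 'i \<Rightarrow> real"
  assumes fin: "finite I" and ne: "I \<noteq> {}"
    and nn: "\<And>i j. i \<in> I \<Longrightarrow> j \<in> I \<Longrightarrow> M i j \<ge> 0"
    and row: "\<And>i. i \<in> I \<Longrightarrow> \<exists>j\<in>I. M i j \<ge> 1"
  shows "spectral_radius I M \<ge> 1"
proof (rule ccontr)
  assume "\<not> spectral_radius I M \<ge> 1"
  then have lt: "spectral_radius I M < 1" by simp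
  define \<rho> where "\<rho> = spectral_radius I M"
  obtain c0 where "is_eigenvalue I M c0" "cmod c0 = \<rho>" using sr_facts(1)[OF fin ne] \<rho>_def by blast
  then have \<rho>0: "\<rho> \<ge> 0" by auto
  define r where "r = (1 + \<rho>) / 2"
  have r0: "r > 0" and r1: "r < 1" using \<rho>0 lt \<rho>_def r_def by auto
  have evr: "cmod c \<le> r" if "is_eigenvalue I M c" for c
    using sr_facts(2)[OF fin ne that] \<rho>_def r_def lt by simp
  obtain E where E: "E > 0" "\<And>k i j. i \<in> I \<Longrightarrow> j \<in> I \<Longrightarrow> \<bar>mpow I M k i j\<bar> \<le> E * (real k + 1) ^ (card I - 1) * r ^ k"
    using growth[OF fin ne r0 evr] by blast
  have R1: "(\<Sum>j\<in>I. mpow I M k i j) \<ge> 1" if "i \<in> I" for k i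
    using that
  proof (induction k arbitrary: i)
    case 0 then show ?case using rowsum_0[OF fin] by simp
  next
    case (Suc k)
    obtain j where j: "j \<in> I" "M i j \<ge> 1" using row[OF Suc.prems] by blast
    have "1 \<le> M i j * (\<Sum>l\<in>I. mpow I M k j l)"
    proof -
      have "1 * 1 \<le> M i j * (\<Sum>l\<in>I. mpow I M k j l)"
        using Suc.IH[OF j(1)] j(2) by (intro mult_mono) auto
      then show ?thesis by simp
    qed
    also have "\<dots> \<le> (\<Sum>l\<in>I. M i l * (\<Sum>j\<in>I. mpow I M k l j))"
    proof (rule member_le_sum[OF j(1) _ fin])
      fix x assume "x \<in> I - {j}"
      then have x: "x \<in> I" by simp
      have "0 \<le> M i x" using nn[OF Suc.prems x] .
      moreover have "0 \<le> (\<Sum>j\<in>I. mpow I M k x j)" using Suc.IH[OF x] by linarith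
      ultimately show "0 \<le> M i x * (\<Sum>j\<in>I. mpow I M k x j)" by (rule mult_nonneg_nonneg)
    qed
    finally show ?case using rowsum_Suc[OF fin Suc.prems] by simp
  qed
  obtain i0 where i0: "i0 \<in> I" using ne by blast
  have bnd: "1 \<le> real (card I) * E * ((real k + 1) ^ (card I - 1) * r ^ k)" for k
  proof -
    have "1 \<le> (\<Sum>j\<in>I. mpow I M k i0 j)" by (rule R1[OF i0])
    also have "\<dots> \<le> (\<Sum>j\<in>I. E * (real k + 1) ^ (card I - 1) * r ^ k)"
      using E(2)[OF i0] by (intro sum_mono) (metis abs_ge_self order_trans)
    also have "\<dots> = real (card I) * E * ((real k + 1) ^ (card I - 1) * r ^ k)" by simp
    finally show ?thesis .
  qed
  have "(\<lambda>k. real (card I) * E * ((real k + 1) ^ (card I - 1) * r ^ k)) \<longlonglongrightarrow> real (card I) * E * 0"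
    by (intro tendsto_mult tendsto_const poly_geom_lim) (use r0 r1 in auto)
  then have "\<forall>\<^sub>F k in sequentially. real (card I) * E * ((real k + 1) ^ (card I - 1) * r ^ k) < 1"
    by (intro order_tendstoD(2)) auto
  then obtain k0 where "\<forall>k\<ge>k0. real (card I) * E * ((real k + 1) ^ (card I - 1) * r ^ k) < 1"
    unfolding eventually_sequentially by blast
  then have k: "real (card I) * E * ((real k0 + 1) ^ (card I - 1) * r ^ k0) < 1" by blast
  with bnd[of k0] show False by simp
qed

lemma fekete:
  fixes a :: "nat \<Rightarrow> real"
  assumes sub: "\<And>k l. a (k + l) \<le> a k + a l" and nn: "\<And>k. a k \<ge> 0"
  shows "(\<lambda>k. a k / real k) \<longlonglongrightarrow> Inf {a k / real k | k. k \<ge> 1}"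
    and "k \<ge> 1 \<Longrightarrow> Inf {a k / real k | k. k \<ge> 1} \<le> a k / real k"
proof -
  define S where "S = {a k / real k | k. k \<ge> 1}"
  define L where "L = Inf S"
  have bdd: "bdd_below S" unfolding S_def bdd_below_def using nn by (auto intro!: exI[of _ 0])
  have Sne: "S \<noteq> {}" unfolding S_def by auto
  have low: "L \<le> a k / real k" if "k \<ge> 1" for k
    unfolding L_def using bdd that by (intro cInf_lower) (auto simp: S_def)
  then show "k \<ge> 1 \<Longrightarrow> Inf {a k / real k | k. k \<ge> 1} \<le> a k / real k"
    unfolding L_def S_def by blast
  show "(\<lambda>k. a k / real k) \<longlonglongrightarrow> Inf {a k / real k | k. k \<ge> 1}"
    unfolding S_def[symmetric] L_def[symmetric]
  proof (rule LIMSEQ_I)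
    fix r :: real assume r: "r > 0"
    have "Inf S < L + r / 2" using r L_def by simp
    then obtain x where "x \<in> S" "x < L + r / 2" using cInf_less_iff[OF Sne bdd] by blast
    then obtain m where m: "m \<ge> 1" "a m / real m < L + r / 2" unfolding S_def by blast
    define C where "C = (\<Sum>j<m. a j)"
    have Cj: "a j \<le> C" if "j < m" for j
      unfolding C_def using that nn by (intro member_le_sum) auto
    have C0: "C \<ge> 0" unfolding C_def using nn by (simp add: sum_nonneg)
    have qm: "a (q * m + j) \<le> real q * a m + a j" for q j
    proof (induction q)
      case (Suc q)
      have "a (Suc q * m + j) = a (m + (q * m + j))" by (simp add: algebra_simps)
      also have "\<dots> \<le> a m + a (q * m + j)" by (rule sub)
      finally show ?case using Suc by (simp add: algebra_simps)
    qed simp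
    obtain no :: nat where no: "real no > 2 * C / r" using reals_Archimedean2 by blast
    show "\<exists>no. \<forall>n\<ge>no. norm (a n / real n - L) < r"
    proof (intro exI[of _ "Suc no"] allI impI)
      fix n assume n: "n \<ge> Suc no"
      then have npos: "real n > 0" by simp
      have "a n = a ((n div m) * m + n mod m)" by simp
      also have "\<dots> \<le> real (n div m) * a m + a (n mod m)" by (rule qm)
      also have "\<dots> \<le> real (n div m) * a m + C" using Cj[of "n mod m"] m(1) by simp
      also have "real (n div m) * a m = real (n div m * m) * (a m / real m)" using m(1) by simp
      also have "\<dots> \<le> real n * (a m / real m)"
      proof (rule mult_right_mono)
        have "n div m * m \<le> n" by (rule div_times_less_eq_dividend)
        then show "real (n div m * m) \<le> real n" by (rule of_nat_mono)
        show "0 \<le> a m / real m" using nn[of m] by simp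
      qed
      finally have "a n \<le> real n * (a m / real m) + C" by simp
      then have "a n / real n \<le> a m / real m + C / real n"
        using npos by (simp add: divide_simps mult.commute)
      moreover have "C / real n < r / 2"
      proof -
        have "real n > 2 * C / r" using no n by simp
        then have "2 * C < r * real n" using r by (simp add: divide_less_eq mult.commute)
        then show ?thesis using npos by (simp add: divide_less_eq)
      qed
      moreover have "L \<le> a n / real n" using low n by simp
      ultimately have h1: "a n / real n - L < r" and h2: "0 \<le> a n / real n - L" using m(2) by linarith+
      then show "norm (a n / real n - L) < r" by simp
    qed
  qed
qed


primrec PP :: "('a \<Rightarrow> 'a set) \<Rightarrow> nat \<Rightarrow> 'a \<Rightarrow> real" where
  "PP D 0 i = 1"
| "PP D (Suc k) i = real (card (D i)) * Max (PP D k ` D i)"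

lemma glim: "(\<lambda>k. (c + x * log 2 (real k + 1)) / real k) \<longlonglongrightarrow> 0" by real_asymp

locale qsys =
  fixes F :: "'x \<Rightarrow> 'u \<Rightarrow> 'x set" and Q :: "'x set"
    and AA :: "'x set set" and G :: "'x set \<Rightarrow> 'u"
  assumes F_ne: "\<And>x u. F x u \<noteq> {}"
    and Q_ne: "Q \<noteq> {}"
    and qip: "quasi_invariant_partition F Q AA G"
begin

abbreviation "D \<equiv> Dset F AA G"
abbreviation "P \<equiv> PP D"
definition "p k = Max (P k ` AA)"

definition walk :: "'x set list \<Rightarrow> bool" where
  "walk \<alpha> \<longleftrightarrow> set \<alpha> \<subseteq> AA \<and> (\<forall>t. Suc t < length \<alpha> \<longrightarrow> \<alpha> ! Suc t \<in> D (\<alpha> ! t))"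

definition "Wn n = {\<alpha>. length \<alpha> = n \<and> walk \<alpha>}"
definition "words n = {\<alpha>. length \<alpha> = n \<and> set \<alpha> \<subseteq> AA}"

lemma finA: "finite AA" and subQ: "A \<in> AA \<Longrightarrow> A \<subseteq> Q" and cov: "Q \<subseteq> \<Union>AA"
  and inv: "A \<in> AA \<Longrightarrow> Fset F A (G A) \<subseteq> Q"
  and part1: "A \<in> AA \<Longrightarrow> A - \<Union>{B\<in>AA. B \<noteq> A} \<noteq> {}"
  and part2: "A \<in> AA \<Longrightarrow> B \<in> D A \<Longrightarrow> Fset F A (G A) \<inter> (B - \<Union>{C\<in>D A. C \<noteq> B}) \<noteq> {}"
  using qip unfolding quasi_invariant_partition_def invariant_cover_def by auto

lemma neA: "AA \<noteq> {}" using Q_ne cov by auto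

lemma D_sub: "D i \<subseteq> AA" by (auto simp: Dset_def)
lemma D_fin: "finite (D i)" using finA D_sub by (rule finite_subset[rotated])

lemma D_mem: "B \<in> AA \<Longrightarrow> Fset F i (G i) \<inter> B \<noteq> {} \<Longrightarrow> B \<in> D i"
  by (auto simp: Dset_def)

lemma D_ne: assumes i: "i \<in> AA" shows "D i \<noteq> {}"
proof -
  obtain x where x: "x \<in> i" using part1[OF i] by blast
  obtain y where y: "y \<in> F x (G i)" using F_ne by blast
  have yF: "y \<in> Fset F i (G i)" using x y by (auto simp: Fset_def)
  then have "y \<in> Q" using inv[OF i] by blast
  then obtain B where B: "B \<in> AA" "y \<in> B" using cov by blast
  then have "B \<in> D i" using yF by (intro D_mem) auto
  then show ?thesis by blast
qed

lemma d_ge1: "i \<in> AA \<Longrightarrow> card (D i) \<ge> 1"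
  using D_ne D_fin by (simp add: Suc_le_eq card_gt_0_iff)

lemma P_ge1: "i \<in> AA \<Longrightarrow> P k i \<ge> 1"
proof (induction k arbitrary: i)
  case (Suc k)
  obtain j where j: "j \<in> D i" "P k j = Max (P k ` D i)"
    using Max_in[OF finite_imageI[OF D_fin] ] D_ne[OF Suc.prems] by (metis (no_types, lifting) empty_is_image imageE)
  have "P k j \<ge> 1" using Suc.IH j(1) D_sub by blast
  moreover have "real (card (D i)) \<ge> 1" using d_ge1[OF Suc.prems] by simp
  ultimately have "1 * 1 \<le> real (card (D i)) * Max (P k ` D i)" using j(2)
    by (intro mult_mono) auto
  then show ?case by simp
qed simp

lemma p_attain: "\<exists>i\<in>AA. p k = P k i"
  unfolding p_def using Max_in[OF finite_imageI[OF finA] ] neA by (metis (no_types, lifting) empty_is_image imageE)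

lemma P_le_p: "i \<in> AA \<Longrightarrow> P k i \<le> p k"
  unfolding p_def using finA by (intro Max_ge) auto

lemma p_ge1: "p k \<ge> 1" using p_attain P_ge1 by metis

lemma P_sub: "i \<in> AA \<Longrightarrow> P (k + l) i \<le> P k i * p l"
proof (induction k arbitrary: i)
  case 0 then show ?case using P_le_p by simp
next
  case (Suc k)
  obtain j where j: "j \<in> D i" "P (k + l) j = Max (P (k + l) ` D i)"
    using Max_in[OF finite_imageI[OF D_fin] ] D_ne[OF Suc.prems] by (metis (no_types, lifting) empty_is_image imageE)
  have jA: "j \<in> AA" using j(1) D_sub by blast
  have "Max (P (k + l) ` D i) \<le> P k j * p l" using j(2) Suc.IH[OF jA] by simp
  also have "\<dots> \<le> Max (P k ` D i) * p l"
    using j(1) D_fin p_ge1[of l] by (intro mult_right_mono Max_ge) auto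
  finally have "real (card (D i)) * Max (P (k + l) ` D i) \<le> real (card (D i)) * (Max (P k ` D i) * p l)"
    by (intro mult_left_mono) auto
  then show ?case by (simp add: mult.assoc)
qed

lemma p_sub: "p (k + l) \<le> p k * p l"
proof -
  obtain i where i: "i \<in> AA" "p (k + l) = P (k + l) i" using p_attain by blast
  have "P (k + l) i \<le> P k i * p l" by (rule P_sub[OF i(1)])
  also have "\<dots> \<le> p k * p l" using P_le_p[OF i(1)] p_ge1[of l] by (intro mult_right_mono) auto
  finally show ?thesis using i(2) by simp
qed

lemma p0: "p 0 = 1"
proof -
  have "P 0 ` AA = {1}" using neA by auto
  then show ?thesis unfolding p_def by simp
qed

lemma walk_Cons: "walk (a # \<beta>) \<longleftrightarrow> a \<in> AA \<and> walk \<beta> \<and> (\<beta> \<noteq> [] \<longrightarrow> \<beta> ! 0 \<in> D a)"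
proof
  assume w: "walk (a # \<beta>)"
  then have "a \<in> AA" "set \<beta> \<subseteq> AA" by (auto simp: walk_def)
  moreover have "\<beta> ! Suc t \<in> D (\<beta> ! t)" if "Suc t < length \<beta>" for t
    using w that unfolding walk_def by (metis Suc_less_eq length_Cons nth_Cons_Suc)
  moreover have "\<beta> ! 0 \<in> D a" if "\<beta> \<noteq> []"
    using w that unfolding walk_def by (metis length_Cons length_greater_0_conv nth_Cons_0 nth_Cons_Suc Suc_less_eq)
  ultimately show "a \<in> AA \<and> walk \<beta> \<and> (\<beta> \<noteq> [] \<longrightarrow> \<beta> ! 0 \<in> D a)" by (auto simp: walk_def)
next
  assume h: "a \<in> AA \<and> walk \<beta> \<and> (\<beta> \<noteq> [] \<longrightarrow> \<beta> ! 0 \<in> D a)"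
  show "walk (a # \<beta>)"
    unfolding walk_def
  proof (intro conjI allI impI)
    show "set (a # \<beta>) \<subseteq> AA" using h by (auto simp: walk_def)
    fix t assume t: "Suc t < length (a # \<beta>)"
    show "(a # \<beta>) ! Suc t \<in> D ((a # \<beta>) ! t)"
    proof (cases t)
      case 0 then show ?thesis using h t by auto
    next
      case (Suc t') then show ?thesis using h t by (auto simp: walk_def)
    qed
  qed
qed

lemma walk_Nil: "walk []" by (simp add: walk_def)

lemma walk_le: "walk \<alpha> \<Longrightarrow> length \<alpha> = Suc k \<Longrightarrow> (\<Prod>t<k. real (card (D (\<alpha> ! t)))) \<le> P k (\<alpha> ! 0)"
proof (induction k arbitrary: \<alpha>)
  case 0 then show ?case by simp
next
  case (Suc k)
  then obtain a \<beta> where \<alpha>: "\<alpha> = a # \<beta>" by (cases \<alpha>) auto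
  have lb: "length \<beta> = Suc k" using Suc.prems \<alpha> by simp
  have wb: "a \<in> AA" "walk \<beta>" "\<beta> ! 0 \<in> D a" using Suc.prems(1) lb unfolding \<alpha> walk_Cons by auto
  have "(\<Prod>t<Suc k. real (card (D (\<alpha> ! t)))) = real (card (D a)) * (\<Prod>t<k. real (card (D (\<beta> ! t))))"
    unfolding prod.lessThan_Suc_shift \<alpha> by simp
  also have "\<dots> \<le> real (card (D a)) * P k (\<beta> ! 0)"
    using Suc.IH[OF wb(2) lb] by (intro mult_left_mono) auto
  also have "\<dots> \<le> real (card (D a)) * Max (P k ` D a)"
    using wb(3) D_fin by (intro mult_left_mono Max_ge) auto
  finally show ?case unfolding \<alpha> by simp
qed

lemma walk_ex: "i \<in> AA \<Longrightarrow> \<exists>\<alpha>. walk \<alpha> \<and> length \<alpha> = Suc k \<and> \<alpha> ! 0 = i \<and> (\<Prod>t<k. real (card (D (\<alpha> ! t)))) = P k i"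
proof (induction k arbitrary: i)
  case 0
  then show ?case by (intro exI[of _ "[i]"]) (simp add: walk_Cons walk_Nil)
next
  case (Suc k)
  obtain j where j: "j \<in> D i" "P k j = Max (P k ` D i)"
    using Max_in[OF finite_imageI[OF D_fin] ] D_ne[OF Suc.prems] by (metis (no_types, lifting) empty_is_image imageE)
  have jA: "j \<in> AA" using j(1) D_sub by blast
  obtain \<beta> where \<beta>: "walk \<beta>" "length \<beta> = Suc k" "\<beta> ! 0 = j" "(\<Prod>t<k. real (card (D (\<beta> ! t)))) = P k j"
    using Suc.IH[OF jA] by blast
  show ?case
  proof (intro exI[of _ "i # \<beta>"] conjI)
    show "walk (i # \<beta>)" using \<beta> j Suc.prems by (simp add: walk_Cons)
    show "(\<Prod>t<Suc k. real (card (D ((i # \<beta>) ! t)))) = P (Suc k) i"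
      unfolding prod.lessThan_Suc_shift using \<beta>(4) j(2) by simp
  qed (use \<beta> in auto)
qed

lemma walk_append: "walk xs \<Longrightarrow> walk ys \<Longrightarrow> xs \<noteq> [] \<Longrightarrow> ys \<noteq> [] \<Longrightarrow> ys ! 0 \<in> D (last xs) \<Longrightarrow> walk (xs @ ys)"
proof (induction xs)
  case Nil then show ?case by simp
next
  case (Cons a xs)
  show ?case
  proof (cases "xs = []")
    case True
    then show ?thesis using Cons.prems by (simp add: walk_Cons)
  next
    case False
    have wa: "a \<in> AA" "walk xs" "xs ! 0 \<in> D a" using Cons.prems(1) False by (auto simp: walk_Cons)
    have "walk (xs @ ys)" using Cons.IH[OF wa(2) Cons.prems(2) False Cons.prems(4)] Cons.prems(5) False by simp
    then show ?thesis using wa False by (simp add: walk_Cons nth_append)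
  qed
qed

lemma walk_take: "walk \<alpha> \<Longrightarrow> walk (take m \<alpha>)"
  unfolding walk_def by (auto dest: in_set_takeD)

lemma wordsfin: "finite (words n)"
proof -
  have "words n = {xs. set xs \<subseteq> AA \<and> length xs = n}" unfolding words_def by auto
  then show ?thesis using finite_lists_length_eq[OF finA] by simp
qed

lemma W_words: "Wn n \<subseteq> words n" unfolding Wn_def words_def walk_def by auto
lemma Wfin: "finite (Wn n)" using W_words wordsfin by (rule finite_subset)

lemma ext:
  assumes \<alpha>: "\<alpha> \<in> Wn n" and t: "Suc t < n" and B: "B \<in> D (\<alpha> ! t)"
  shows "\<exists>\<beta>\<in>Wn n. take (Suc t) \<beta> = take (Suc t) \<alpha> \<and> \<beta> ! Suc t = B"
proof -
  have BA: "B \<in> AA" using B D_sub by blast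
  obtain \<gamma> where \<gamma>: "walk \<gamma>" "length \<gamma> = Suc (n - Suc (Suc t))" "\<gamma> ! 0 = B"
    using walk_ex[OF BA] by blast
  have la: "length \<alpha> = n" "walk \<alpha>" using \<alpha> by (auto simp: Wn_def)
  define xs where "xs = take (Suc t) \<alpha>"
  have lxs: "length xs = Suc t" using la t by (simp add: xs_def)
  have xs_eq: "xs = take t \<alpha> @ [\<alpha> ! t]" unfolding xs_def using la t by (simp add: take_Suc_conv_app_nth)
  have "walk (xs @ \<gamma>)"
  proof (rule walk_append)
    show "walk xs" unfolding xs_def using la(2) by (rule walk_take)
    show "walk \<gamma>" by (rule \<gamma>(1))
    show "xs \<noteq> []" using lxs by auto
    show "\<gamma> \<noteq> []" using \<gamma>(2) by auto
    show "\<gamma> ! 0 \<in> D (last xs)" using \<gamma>(3) B xs_eq by simp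
  qed
  moreover have "length (xs @ \<gamma>) = n" using lxs \<gamma>(2) t by simp
  moreover have "take (Suc t) (xs @ \<gamma>) = take (Suc t) \<alpha>" using lxs by (simp add: xs_def[symmetric])
  moreover have "(xs @ \<gamma>) ! Suc t = B" using lxs \<gamma>(3) by (simp add: nth_append)
  ultimately show ?thesis unfolding Wn_def by blast
qed

lemma take_nth_eq: "take (Suc t) \<beta> = take (Suc t) \<alpha> \<Longrightarrow> \<beta> ! t = \<alpha> ! t"
  by (metis lessI nth_take)

lemma Pset_W_lt:
  assumes \<alpha>: "\<alpha> \<in> Wn n" and t: "Suc t < n"
  shows "Pset (Wn n) n \<alpha> t = D (\<alpha> ! t)"
proof
  have tl: "t < n - 1" using t by simp
  show "Pset (Wn n) n \<alpha> t \<subseteq> D (\<alpha> ! t)"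
  proof
    fix B assume "B \<in> Pset (Wn n) n \<alpha> t"
    then obtain \<beta> where \<beta>: "\<beta> \<in> Wn n" "take (Suc t) \<beta> = take (Suc t) \<alpha>" "B = \<beta> ! Suc t"
      unfolding Pset_def using tl by auto
    have "\<beta> ! t = \<alpha> ! t" using \<beta>(2) by (rule take_nth_eq)
    then show "B \<in> D (\<alpha> ! t)" using \<beta> t unfolding Wn_def walk_def by auto
  qed
  show "D (\<alpha> ! t) \<subseteq> Pset (Wn n) n \<alpha> t"
  proof
    fix B assume "B \<in> D (\<alpha> ! t)"
    from ext[OF \<alpha> t this] obtain \<beta> where "\<beta> \<in> Wn n" "take (Suc t) \<beta> = take (Suc t) \<alpha>" "\<beta> ! Suc t = B"
      by blast
    then show "B \<in> Pset (Wn n) n \<alpha> t" unfolding Pset_def using tl by auto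
  qed
qed

lemma heads_W: assumes n: "n \<ge> 1" shows "{\<beta> ! 0 | \<beta>. \<beta> \<in> Wn n} = AA"
proof
  show "{\<beta> ! 0 | \<beta>. \<beta> \<in> Wn n} \<subseteq> AA"
    using n unfolding Wn_def walk_def by (auto intro!: nth_mem[THEN subsetD[rotated]])
  show "AA \<subseteq> {\<beta> ! 0 | \<beta>. \<beta> \<in> Wn n}"
  proof
    fix i assume "i \<in> AA"
    from walk_ex[OF this, of "n - 1"] obtain \<alpha> where "walk \<alpha>" "length \<alpha> = Suc (n - 1)" "\<alpha> ! 0 = i" by blast
    then show "i \<in> {\<beta> ! 0 | \<beta>. \<beta> \<in> Wn n}" using n unfolding Wn_def by auto
  qed
qed

lemma Pset_W_last: "n \<ge> 1 \<Longrightarrow> Pset (Wn n) n \<alpha> (n - 1) = AA"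
  unfolding Pset_def using heads_W by simp

lemma W_spanning: assumes n: "n \<ge> 1" shows "spanning F Q AA G n (Wn n)"
  unfolding spanning_def
proof (intro conjI ballI allI impI)
  show "Wn n \<subseteq> {\<alpha>. length \<alpha> = n \<and> set \<alpha> \<subseteq> AA}" using W_words unfolding words_def .
  show "Q \<subseteq> \<Union> {\<beta> ! 0 | \<beta>. \<beta> \<in> Wn n}" unfolding heads_W[OF n] by (rule cov)
  fix \<alpha> t assume \<alpha>: "\<alpha> \<in> Wn n" and t: "t < n - 1"
  have tA: "\<alpha> ! t \<in> AA" using \<alpha> t unfolding Wn_def walk_def by auto
  show "Fset F (\<alpha> ! t) (G (\<alpha> ! t)) \<subseteq> \<Union> (Pset (Wn n) n \<alpha> t)"
  proof
    fix y assume y: "y \<in> Fset F (\<alpha> ! t) (G (\<alpha> ! t))"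
    then have "y \<in> Q" using inv[OF tA] by blast
    then obtain B where B: "B \<in> AA" "y \<in> B" using cov by blast
    then have "B \<in> D (\<alpha> ! t)" using y by (intro D_mem) auto
    then show "y \<in> \<Union> (Pset (Wn n) n \<alpha> t)" using Pset_W_lt[OF \<alpha>] t B(2) by auto
  qed
qed

lemma W_prod:
  assumes \<alpha>: "\<alpha> \<in> Wn n" and n: "n \<ge> 1"
  shows "real (\<Prod>t<n. card (Pset (Wn n) n \<alpha> t)) = real (card AA) * (\<Prod>t<n - 1. real (card (D (\<alpha> ! t))))"
proof -
  obtain m where m: "n = Suc m" using n by (cases n) auto
  have "(\<Prod>t<n. card (Pset (Wn n) n \<alpha> t)) = (\<Prod>t<m. card (Pset (Wn n) n \<alpha> t)) * card (Pset (Wn n) n \<alpha> m)"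
    unfolding m by simp
  also have "(\<Prod>t<m. card (Pset (Wn n) n \<alpha> t)) = (\<Prod>t<m. card (D (\<alpha> ! t)))"
    using Pset_W_lt[OF \<alpha>] m by (intro prod.cong) auto
  also have "card (Pset (Wn n) n \<alpha> m) = card AA" using Pset_W_last[OF n] m by simp
  finally show ?thesis using m by (simp add: mult.commute)
qed


lemma Pset_mono: "S \<subseteq> S' \<Longrightarrow> Pset S n \<alpha> t \<subseteq> Pset S' n \<alpha> t"
  unfolding Pset_def by auto

lemma Pset_sub: assumes S: "S \<subseteq> words n" and n: "n \<ge> 1" shows "Pset S n \<alpha> t \<subseteq> AA"
proof
  fix B assume B: "B \<in> Pset S n \<alpha> t"
  show "B \<in> AA"
  proof (cases "t < n - 1")
    case True
    then obtain \<beta> where "\<beta> \<in> S" "B = \<beta> ! (t + 1)" using B unfolding Pset_def by auto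
    then show ?thesis using S True unfolding words_def by (auto intro!: nth_mem[THEN subsetD[rotated]])
  next
    case False
    then obtain \<beta> where "\<beta> \<in> S" "B = \<beta> ! 0" using B unfolding Pset_def by auto
    then show ?thesis using S n unfolding words_def by (auto intro!: nth_mem[THEN subsetD[rotated]])
  qed
qed

lemma S_heads:
  assumes sp: "spanning F Q AA G n S" and n: "n \<ge> 1" and a: "a \<in> AA"
  shows "\<exists>\<beta>\<in>S. \<beta> ! 0 = a"
proof -
  obtain x where x: "x \<in> a" "x \<notin> \<Union>{B\<in>AA. B \<noteq> a}" using part1[OF a] by blast
  have "x \<in> Q" using subQ[OF a] x(1) by blast
  then obtain \<beta> where \<beta>: "\<beta> \<in> S" "x \<in> \<beta> ! 0" using sp unfolding spanning_def by blast
  have "\<beta> ! 0 \<in> AA" using \<beta>(1) sp n unfolding spanning_def by (auto intro!: nth_mem[THEN subsetD[rotated]])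
  then have "\<beta> ! 0 = a" using x \<beta>(2) by blast
  then show ?thesis using \<beta>(1) by blast
qed

lemma S_D:
  assumes sp: "spanning F Q AA G n S" and \<alpha>: "\<alpha> \<in> S" and t: "t < n - 1"
  shows "D (\<alpha> ! t) \<subseteq> Pset S n \<alpha> t"
proof
  fix B assume B: "B \<in> D (\<alpha> ! t)"
  have Sw: "S \<subseteq> words n" using sp unfolding spanning_def words_def by blast
  have tA: "\<alpha> ! t \<in> AA" using Sw \<alpha> t unfolding words_def by (auto intro!: nth_mem[THEN subsetD[rotated]])
  obtain y where y: "y \<in> Fset F (\<alpha> ! t) (G (\<alpha> ! t))" "y \<in> B" "y \<notin> \<Union>{C\<in>D (\<alpha> ! t). C \<noteq> B}"
    using part2[OF tA B] by blast
  have "y \<in> \<Union>(Pset S n \<alpha> t)" using sp \<alpha> t y(1) unfolding spanning_def by blast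
  then obtain C where C: "C \<in> Pset S n \<alpha> t" "y \<in> C" by blast
  have n1: "n \<ge> 1" using t by simp
  have "C \<in> AA" using Pset_sub[OF Sw n1] C(1) by blast
  then have "C \<in> D (\<alpha> ! t)" using y(1) C(2) by (intro D_mem) auto
  then have "C = B" using y(3) C(2) by blast
  then show "B \<in> Pset S n \<alpha> t" using C(1) by simp
qed

lemma S_contains_W:
  assumes sp: "spanning F Q AA G n S" and n: "n \<ge> 1"
  shows "Wn n \<subseteq> S"
proof
  fix \<alpha> assume \<alpha>: "\<alpha> \<in> Wn n"
  have la: "length \<alpha> = n" "walk \<alpha>" using \<alpha> by (auto simp: Wn_def)
  have Sw: "S \<subseteq> words n" using sp unfolding spanning_def words_def by blast
  have claim: "t < n \<Longrightarrow> \<exists>\<beta>\<in>S. take (Suc t) \<beta> = take (Suc t) \<alpha>" for t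
  proof (induction t)
    case 0
    have "\<alpha> ! 0 \<in> AA" using la n unfolding walk_def by (auto intro!: nth_mem[THEN subsetD[rotated]])
    then obtain \<beta> where \<beta>: "\<beta> \<in> S" "\<beta> ! 0 = \<alpha> ! 0" using S_heads[OF sp n] by blast
    have lb: "length \<beta> = n" using \<beta>(1) Sw unfolding words_def by auto
    have "take (Suc 0) \<beta> = take (Suc 0) \<alpha>"
      using \<beta>(2) la(1) lb n by (simp add: take_Suc_conv_app_nth)
    then show ?case using \<beta>(1) by blast
  next
    case (Suc t)
    then obtain \<beta> where \<beta>: "\<beta> \<in> S" "take (Suc t) \<beta> = take (Suc t) \<alpha>" by auto
    have bt: "\<beta> ! t = \<alpha> ! t" using \<beta>(2) by (rule take_nth_eq)
    have "\<alpha> ! Suc t \<in> D (\<alpha> ! t)" using la Suc.prems unfolding walk_def by auto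
    moreover have tl: "t < n - 1" using Suc.prems by simp
    ultimately have "\<alpha> ! Suc t \<in> Pset S n \<beta> t" using S_D[OF sp \<beta>(1) tl] bt by auto
    then obtain \<gamma> where \<gamma>: "\<gamma> \<in> S" "take (t + 1) \<gamma> = take (t + 1) \<beta>" "\<alpha> ! Suc t = \<gamma> ! (t + 1)"
      unfolding Pset_def using Suc.prems by (auto split: if_splits)
    have lg: "length \<gamma> = n" using \<gamma>(1) Sw unfolding words_def by auto
    have "take (Suc (Suc t)) \<gamma> = take (Suc t) \<gamma> @ [\<gamma> ! Suc t]"
      using lg Suc.prems by (simp add: take_Suc_conv_app_nth)
    also have "\<dots> = take (Suc t) \<alpha> @ [\<alpha> ! Suc t]" using \<gamma>(2,3) \<beta>(2) by simp
    also have "\<dots> = take (Suc (Suc t)) \<alpha>" using la(1) Suc.prems by (simp add: take_Suc_conv_app_nth)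
    finally show ?case using \<gamma>(1) by blast
  qed
  obtain \<beta> where \<beta>: "\<beta> \<in> S" "take (Suc (n - 1)) \<beta> = take (Suc (n - 1)) \<alpha>" using claim[of "n - 1"] n by auto
  have lb: "length \<beta> = n" using \<beta>(1) Sw unfolding words_def by auto
  have "\<beta> = \<alpha>" using \<beta>(2) lb la(1) n by simp
  then show "\<alpha> \<in> S" using \<beta>(1) by simp
qed

lemma Nval_W: assumes n: "n \<ge> 1"
  shows "real (Nval (Wn n) n) = real (card AA) * p (n - 1)"
proof -
  define V where "V = {(\<Prod>t<n. card (Pset (Wn n) n \<alpha> t)) | \<alpha>. \<alpha> \<in> Wn n}"
  have Vfin: "finite V" unfolding V_def using Wfin by simp
  have "Wn n \<noteq> {}" using heads_W[OF n] neA by auto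
  then have Vne: "V \<noteq> {}" unfolding V_def by auto
  have NV: "Nval (Wn n) n = Max V" unfolding Nval_def V_def ..
  have ub: "real v \<le> real (card AA) * p (n - 1)" if "v \<in> V" for v
  proof -
    obtain \<alpha> where \<alpha>: "\<alpha> \<in> Wn n" "v = (\<Prod>t<n. card (Pset (Wn n) n \<alpha> t))" using \<open>v \<in> V\<close> unfolding V_def by blast
    have la: "length \<alpha> = Suc (n - 1)" "walk \<alpha>" using \<alpha>(1) n by (auto simp: Wn_def)
    have a0: "\<alpha> ! 0 \<in> AA" using la unfolding walk_def by (auto intro!: nth_mem[THEN subsetD[rotated]])
    have "real v = real (card AA) * (\<Prod>t<n - 1. real (card (D (\<alpha> ! t))))"
      using W_prod[OF \<alpha>(1) n] \<alpha>(2) by simp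
    also have "\<dots> \<le> real (card AA) * P (n - 1) (\<alpha> ! 0)"
      using walk_le[OF la(2) la(1)] by (intro mult_left_mono) auto
    also have "\<dots> \<le> real (card AA) * p (n - 1)"
      using P_le_p[OF a0] by (intro mult_left_mono) auto
    finally show ?thesis .
  qed
  obtain i where i: "i \<in> AA" "p (n - 1) = P (n - 1) i" using p_attain by blast
  obtain \<alpha> where \<alpha>: "walk \<alpha>" "length \<alpha> = Suc (n - 1)" "\<alpha> ! 0 = i"
    "(\<Prod>t<n - 1. real (card (D (\<alpha> ! t)))) = P (n - 1) i"
    using walk_ex[OF i(1)] by blast
  have \<alpha>W: "\<alpha> \<in> Wn n" using \<alpha> n by (auto simp: Wn_def)
  have vin: "(\<Prod>t<n. card (Pset (Wn n) n \<alpha> t)) \<in> V" unfolding V_def using \<alpha>W by blast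
  have "real (card AA) * p (n - 1) = real (\<Prod>t<n. card (Pset (Wn n) n \<alpha> t))"
    using W_prod[OF \<alpha>W n] \<alpha>(4) i(2) by simp
  also have "\<dots> \<le> real (Max V)" using Max_ge[OF Vfin vin] by (simp only: of_nat_le_iff)
  finally have lb: "real (card AA) * p (n - 1) \<le> real (Max V)" .
  have "real (Max V) \<le> real (card AA) * p (n - 1)" using ub Max_in[OF Vfin Vne] by blast
  then show ?thesis using lb NV by simp
qed

lemma Nval_W_le:
  assumes sp: "spanning F Q AA G n S" and n: "n \<ge> 1"
  shows "Nval (Wn n) n \<le> Nval S n"
proof -
  have Sw: "S \<subseteq> words n" using sp unfolding spanning_def words_def by blast
  have WS: "Wn n \<subseteq> S" by (rule S_contains_W[OF sp n])
  define V where "V = {(\<Prod>t<n. card (Pset (Wn n) n \<alpha> t)) | \<alpha>. \<alpha> \<in> Wn n}"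
  have Vfin: "finite V" unfolding V_def using Wfin by simp
  have "Wn n \<noteq> {}" using heads_W[OF n] neA by auto
  then have Vne: "V \<noteq> {}" unfolding V_def by auto
  obtain \<alpha> where \<alpha>: "\<alpha> \<in> Wn n" "Max V = (\<Prod>t<n. card (Pset (Wn n) n \<alpha> t))"
    using Max_in[OF Vfin Vne] unfolding V_def by auto
  have Sfin: "finite S" using Sw wordsfin by (rule finite_subset)
  define V' where "V' = {(\<Prod>t<n. card (Pset S n \<alpha> t)) | \<alpha>. \<alpha> \<in> S}"
  have V'fin: "finite V'" unfolding V'_def using Sfin by simp
  have "Nval (Wn n) n = (\<Prod>t<n. card (Pset (Wn n) n \<alpha> t))" unfolding Nval_def using \<alpha>(2) V_def by simp
  also have "\<dots> \<le> (\<Prod>t<n. card (Pset S n \<alpha> t))"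
  proof (rule prod_mono)
    fix t assume "t \<in> {..<n}"
    have "finite (Pset S n \<alpha> t)" using Pset_sub[OF Sw n] finA by (rule finite_subset)
    then show "0 \<le> card (Pset (Wn n) n \<alpha> t) \<and> card (Pset (Wn n) n \<alpha> t) \<le> card (Pset S n \<alpha> t)"
      using Pset_mono[OF WS] by (simp add: card_mono)
  qed
  also have "\<dots> \<le> Max V'" using WS \<alpha>(1) V'fin unfolding V'_def by (intro Max_ge) auto
  also have "\<dots> = Nval S n" unfolding Nval_def V'_def ..
  finally show ?thesis .
qed

lemma r_inv_eq: assumes n: "n \<ge> 1"
  shows "real (r_inv F Q AA G n) = real (card AA) * p (n - 1)"
proof -
  define K where "K = {Nval S n | S. spanning F Q AA G n S}"
  have "K \<subseteq> (\<lambda>S. Nval S n) ` Pow (words n)"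
    unfolding K_def spanning_def words_def by auto
  then have Kfin: "finite K" using wordsfin by (meson finite_Pow_iff finite_imageI finite_subset)
  have "Min K = Nval (Wn n) n"
  proof (rule Min_eqI[OF Kfin])
    show "Nval (Wn n) n \<le> y" if "y \<in> K" for y using that Nval_W_le n unfolding K_def by auto
    show "Nval (Wn n) n \<in> K" unfolding K_def using W_spanning[OF n] by blast
  qed
  then show ?thesis unfolding r_inv_def K_def[symmetric] using Nval_W[OF n] by simp
qed


abbreviation "Mm \<equiv> adj_matrix F G"
abbreviation "Wm \<equiv> wadj_matrix F AA G"
definition "RM k i = (\<Sum>j\<in>AA. mpow AA Mm k i j)"
definition "RW k i = (\<Sum>j\<in>AA. mpow AA Wm k i j)"

lemma Mm_nn: "Mm i j \<ge> 0" by (simp add: adj_matrix_def)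
lemma Wm_nn: "Wm i j \<ge> 0" by (simp add: wadj_matrix_def)

lemma inD: "j \<in> D i \<Longrightarrow> Fset F i (G i) \<inter> j \<noteq> {}" by (simp add: Dset_def)

lemma Mm_row: "i \<in> AA \<Longrightarrow> \<exists>j\<in>AA. Mm i j \<ge> 1"
proof -
  assume i: "i \<in> AA"
  obtain j where j: "j \<in> D i" using D_ne[OF i] by blast
  then show ?thesis using D_sub inD[OF j] by (intro bexI[of _ j]) (auto simp: adj_matrix_def)
qed

lemma Wm_row: "i \<in> AA \<Longrightarrow> \<exists>j\<in>AA. Wm i j \<ge> 1"
proof -
  assume i: "i \<in> AA"
  obtain j where j: "j \<in> D i" using D_ne[OF i] by blast
  then show ?thesis using D_sub inD[OF j] d_ge1[OF i] by (intro bexI[of _ j]) (auto simp: wadj_matrix_def)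
qed

lemma D_filter: "D i = {l \<in> AA. Fset F i (G i) \<inter> l \<noteq> {}}" by (simp add: Dset_def)

lemma RM_Suc: assumes i: "i \<in> AA" shows "RM (Suc k) i = (\<Sum>l\<in>D i. RM k l)"
proof -
  have "RM (Suc k) i = (\<Sum>l\<in>AA. Mm i l * RM k l)" unfolding RM_def by (rule rowsum_Suc[OF finA i])
  also have "\<dots> = (\<Sum>l\<in>AA. if Fset F i (G i) \<inter> l \<noteq> {} then RM k l else 0)"
    by (intro sum.cong) (auto simp: adj_matrix_def)
  also have "\<dots> = (\<Sum>l\<in>D i. RM k l)" unfolding D_filter by (rule sum.inter_filter[OF finA, symmetric])
  finally show ?thesis .
qed

lemma RW_Suc: assumes i: "i \<in> AA" shows "RW (Suc k) i = real (card (D i)) * (\<Sum>l\<in>D i. RW k l)"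
proof -
  have "RW (Suc k) i = (\<Sum>l\<in>AA. Wm i l * RW k l)" unfolding RW_def by (rule rowsum_Suc[OF finA i])
  also have "\<dots> = (\<Sum>l\<in>AA. if Fset F i (G i) \<inter> l \<noteq> {} then real (card (D i)) * RW k l else 0)"
    by (intro sum.cong) (auto simp: wadj_matrix_def)
  also have "\<dots> = (\<Sum>l\<in>D i. real (card (D i)) * RW k l)" unfolding D_filter by (rule sum.inter_filter[OF finA, symmetric])
  finally show ?thesis by (simp add: sum_distrib_left)
qed

lemma RM_nn: "i \<in> AA \<Longrightarrow> RM k i \<ge> 0"
  unfolding RM_def using mpow_nonneg[of AA Mm] Mm_nn by (intro sum_nonneg) auto

lemma P_le_RW: "i \<in> AA \<Longrightarrow> P k i \<le> RW k i"
proof (induction k arbitrary: i)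
  case 0 then show ?case using rowsum_0[OF finA 0] by (simp add: RW_def)
next
  case (Suc k)
  obtain j where j: "j \<in> D i" "P k j = Max (P k ` D i)"
    using Max_in[OF finite_imageI[OF D_fin] ] D_ne[OF Suc.prems] by (metis (no_types, lifting) empty_is_image imageE)
  have nn: "0 \<le> P k l" if "l \<in> D i - {j}" for l
  proof -
    have "l \<in> AA" using that D_sub by blast
    then show ?thesis using P_ge1[of l k] by linarith
  qed
  have "Max (P k ` D i) \<le> (\<Sum>l\<in>D i. P k l)"
    unfolding j(2)[symmetric] by (rule member_le_sum[OF j(1) nn D_fin])
  also have "\<dots> \<le> (\<Sum>l\<in>D i. RW k l)" using Suc.IH D_sub by (intro sum_mono) auto
  finally have "real (card (D i)) * Max (P k ` D i) \<le> real (card (D i)) * (\<Sum>l\<in>D i. RW k l)"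
    by (intro mult_left_mono) auto
  then show ?case using RW_Suc[OF Suc.prems] by simp
qed

lemma RW_le: "i \<in> AA \<Longrightarrow> RW k i \<le> RM k i * P k i"
proof (induction k arbitrary: i)
  case 0 then show ?case using rowsum_0[OF finA 0] by (simp add: RW_def RM_def)
next
  case (Suc k)
  have "(\<Sum>l\<in>D i. RW k l) \<le> (\<Sum>l\<in>D i. RM k l * P k l)" using Suc.IH D_sub by (intro sum_mono) auto
  also have "\<dots> \<le> (\<Sum>l\<in>D i. RM k l * Max (P k ` D i))"
  proof (rule sum_mono)
    fix l assume l: "l \<in> D i"
    then have "l \<in> AA" using D_sub by blast
    then have "0 \<le> RM k l" by (rule RM_nn)
    moreover have "P k l \<le> Max (P k ` D i)" using l D_fin by (intro Max_ge) auto
    ultimately show "RM k l * P k l \<le> RM k l * Max (P k ` D i)" by (rule mult_left_mono[rotated])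
  qed
  also have "\<dots> = (\<Sum>l\<in>D i. RM k l) * Max (P k ` D i)" by (simp add: sum_distrib_right)
  finally have "real (card (D i)) * (\<Sum>l\<in>D i. RW k l) \<le> real (card (D i)) * ((\<Sum>l\<in>D i. RM k l) * Max (P k ` D i))"
    by (intro mult_left_mono) auto
  then show ?case using RW_Suc[OF Suc.prems] RM_Suc[OF Suc.prems] by (simp add: algebra_simps)
qed

definition "a k = log 2 (p k)"

lemma a_nn: "a k \<ge> 0" unfolding a_def using p_ge1[of k] by simp
lemma p_pos: "p k > 0" using p_ge1[of k] by linarith

lemma a_sub: "a (k + l) \<le> a k + a l"
proof -
  have "log 2 (p (k + l)) \<le> log 2 (p k * p l)"
    using p_sub p_pos by (subst log_le_cancel_iff) (auto intro: mult_pos_pos)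
  also have "\<dots> = log 2 (p k) + log 2 (p l)" using p_pos[of k] p_pos[of l] by (simp add: log_mult)
  finally show ?thesis unfolding a_def .
qed

definition "L = Inf {a k / real k | k. k \<ge> 1}"

lemma a_lim: "(\<lambda>k. a k / real k) \<longlonglongrightarrow> L" unfolding L_def using fekete(1)[of a] a_sub a_nn by blast
lemma L_le: "k \<ge> 1 \<Longrightarrow> L \<le> a k / real k" unfolding L_def using fekete(2)[of a] a_sub a_nn by blast

lemma hseq_Suc: "h_inv_seq F Q AA G (Suc m) = (log 2 (real (card AA)) + a m) / real (Suc m)"
proof -
  have cA: "real (card AA) > 0" using finA neA by (simp add: card_gt_0_iff)
  have "h_inv_seq F Q AA G (Suc m) = log 2 (real (card AA) * p m) / real (Suc m)"
    unfolding h_inv_seq_def using r_inv_eq[of "Suc m"] by simp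
  also have "log 2 (real (card AA) * p m) = log 2 (real (card AA)) + a m"
    unfolding a_def using cA p_pos[of m] by (simp add: log_mult)
  finally show ?thesis .
qed

lemma h_lim: "h_inv_seq F Q AA G \<longlonglongrightarrow> L"
proof (rule LIMSEQ_imp_Suc)
  define c where "c = log 2 (real (card AA))"
  have a0: "a 0 = 0" unfolding a_def using p0 by simp
  have eq: "h_inv_seq F Q AA G (Suc m) = (a m / real m) * (real m / (real m + 1)) + c / (real m + 1)" for m
  proof (cases "m = 0")
    case True then show ?thesis using a0 hseq_Suc[of m] by (simp add: c_def)
  next
    case False
    have mm: "a m / real m * real m = a m" using False by simp
    have "(a m / real m) * (real m / (real m + 1)) = a m / (real m + 1)"
      by (simp only: times_divide_eq_right mm)
    then show ?thesis using hseq_Suc[of m] by (simp add: c_def add_divide_distrib add.commute)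
  qed
  have l1: "(\<lambda>m. real m / (real m + 1)) \<longlonglongrightarrow> 1" by real_asymp
  have l2: "(\<lambda>m. c / (real m + 1)) \<longlonglongrightarrow> 0" by real_asymp
  have "(\<lambda>m. (a m / real m) * (real m / (real m + 1)) + c / (real m + 1)) \<longlonglongrightarrow> L * 1 + 0"
    by (intro tendsto_add tendsto_mult a_lim l1 l2)
  then show "(\<lambda>m. h_inv_seq F Q AA G (Suc m)) \<longlonglongrightarrow> L" unfolding eq by simp
qed

lemma h_inv_L: "h_inv F Q AA G = L" unfolding h_inv_def using h_lim by (rule limI)

lemma log_bound:
  assumes "C > 0" "r > 0"
  shows "log 2 (C * (real k + 1) ^ m * r ^ k) = log 2 C + real m * log 2 (real k + 1) + real k * log 2 r"
  using assms by (simp add: log_mult log_nat_power add_pos_nonneg)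


lemma sr_W_ge1: "spectral_radius AA Wm \<ge> 1"
  by (rule sr_ge1[OF finA neA]) (use Wm_nn Wm_row in auto)
lemma sr_M_ge1: "spectral_radius AA Mm \<ge> 1"
  by (rule sr_ge1[OF finA neA]) (use Mm_nn Mm_row in auto)

lemma bound_maxnorm: "L \<le> log 2 (max_norm AA Wm)"
proof -
  have "L \<le> a 1 / real 1" by (rule L_le) simp
  then have L1: "L \<le> log 2 (p 1)" by (simp add: a_def)
  obtain i where i: "i \<in> AA" "p 1 = P 1 i" using p_attain by blast
  have P0D: "P 0 ` D i = {1}" using D_ne[OF i(1)] by auto
  have Pi: "P 1 i = real (card (D i))" by (simp only: One_nat_def PP.simps(2) P0D) simp
  obtain j where j: "j \<in> D i" using D_ne[OF i(1)] by blast
  have jA: "j \<in> AA" using j D_sub by blast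
  have W: "Wm i j = real (card (D i))" using inD[OF j] by (simp add: wadj_matrix_def)
  define X where "X = {\<bar>Wm i j\<bar> | i j. i \<in> AA \<and> j \<in> AA}"
  have "X = (\<lambda>(i, j). \<bar>Wm i j\<bar>) ` (AA \<times> AA)" unfolding X_def by auto
  then have Xfin: "finite X" using finA by simp
  have "\<bar>Wm i j\<bar> \<in> X" unfolding X_def using i(1) jA by blast
  then have "\<bar>Wm i j\<bar> \<le> max_norm AA Wm" unfolding max_norm_def X_def[symmetric] using Xfin by (rule Max_ge[rotated])
  moreover have "p 1 = real (card (D i))" by (rule trans[OF i(2) Pi])
  ultimately have le: "p 1 \<le> max_norm AA Wm" using W by simp
  have "log 2 (p 1) \<le> log 2 (max_norm AA Wm)"
    using le p_pos[of 1] by (subst log_le_cancel_iff) auto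
  then show ?thesis using L1 by simp
qed

lemma bound_rhoW: "L \<le> log 2 (spectral_radius AA Wm)"
proof -
  define \<rho> where "\<rho> = spectral_radius AA Wm"
  have \<rho>1: "\<rho> \<ge> 1" unfolding \<rho>_def by (rule sr_W_ge1)
  then have \<rho>0: "\<rho> > 0" by simp
  obtain E where E: "E > 0" "\<And>k i j. i \<in> AA \<Longrightarrow> j \<in> AA \<Longrightarrow> \<bar>mpow AA Wm k i j\<bar> \<le> E * (real k + 1) ^ (card AA - 1) * \<rho> ^ k"
    using growth[OF finA neA \<rho>0, of Wm] sr_facts(2)[OF finA neA, of Wm] unfolding \<rho>_def by blast
  define m where "m = card AA - 1"
  define C where "C = real (card AA) * E"
  have C0: "C > 0" unfolding C_def using E(1) finA neA by (simp add: card_gt_0_iff)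
  have pk: "p k \<le> C * (real k + 1) ^ m * \<rho> ^ k" for k
  proof -
    obtain i where i: "i \<in> AA" "p k = P k i" using p_attain by blast
    have "P k i \<le> RW k i" by (rule P_le_RW[OF i(1)])
    also have "\<dots> \<le> (\<Sum>j\<in>AA. E * (real k + 1) ^ m * \<rho> ^ k)"
      unfolding RW_def m_def using E(2)[OF i(1)] by (intro sum_mono) (meson abs_ge_self order_trans)
    also have "\<dots> = C * (real k + 1) ^ m * \<rho> ^ k" by (simp add: C_def)
    finally show ?thesis using i(2) by simp
  qed
  have bnd: "L \<le> log 2 \<rho> + (log 2 C + real m * log 2 (real k + 1)) / real k" if k: "k \<ge> 1" for k
  proof -
    have "a k \<le> log 2 (C * (real k + 1) ^ m * \<rho> ^ k)"
      unfolding a_def using pk[of k] p_pos[of k] C0 \<rho>0 by (subst log_le_cancel_iff) auto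
    also have "\<dots> = log 2 C + real m * log 2 (real k + 1) + real k * log 2 \<rho>" by (rule log_bound[OF C0 \<rho>0])
    finally have "a k / real k \<le> (log 2 C + real m * log 2 (real k + 1) + real k * log 2 \<rho>) / real k"
      by (rule divide_right_mono) simp
    also have "\<dots> = log 2 \<rho> + (log 2 C + real m * log 2 (real k + 1)) / real k"
      using k by (simp add: add_divide_distrib)
    finally show ?thesis using L_le[OF k] by linarith
  qed
  have lim: "(\<lambda>k. log 2 \<rho> + (log 2 C + real m * log 2 (real k + 1)) / real k) \<longlonglongrightarrow> log 2 \<rho> + 0"
    by (intro tendsto_add tendsto_const glim)
  have "L \<le> log 2 \<rho> + 0"
    by (rule tendsto_le[OF trivial_limit_sequentially lim tendsto_const])
       (use bnd in \<open>auto simp: eventually_sequentially intro!: exI[of _ 1]\<close>)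
  then show ?thesis unfolding \<rho>_def by simp
qed

lemma bound_lower: "log 2 (spectral_radius AA Wm) - log 2 (spectral_radius AA Mm) \<le> L"
proof -
  define \<rho>w where "\<rho>w = spectral_radius AA Wm"
  define \<rho>m where "\<rho>m = spectral_radius AA Mm"
  have w1: "\<rho>w \<ge> 1" unfolding \<rho>w_def by (rule sr_W_ge1)
  have m1: "\<rho>m \<ge> 1" unfolding \<rho>m_def by (rule sr_M_ge1)
  have m0: "\<rho>m > 0" using m1 by simp
  have w0: "\<rho>w > 0" using w1 by simp
  obtain c where c: "is_eigenvalue AA Wm c" "cmod c = \<rho>w" using sr_facts(1)[OF finA neA, of Wm] \<rho>w_def by blast
  obtain i1 where i1: "i1 \<in> AA" "\<And>k. cmod c ^ k \<le> RW k i1"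
    using eig_lower[OF finA _ c(1)] Wm_nn unfolding RW_def by blast
  obtain E where E: "E > 0" "\<And>k i j. i \<in> AA \<Longrightarrow> j \<in> AA \<Longrightarrow> \<bar>mpow AA Mm k i j\<bar> \<le> E * (real k + 1) ^ (card AA - 1) * \<rho>m ^ k"
    using growth[OF finA neA m0, of Mm] sr_facts(2)[OF finA neA, of Mm] unfolding \<rho>m_def by blast
  define m where "m = card AA - 1"
  define C where "C = real (card AA) * E"
  have C0: "C > 0" unfolding C_def using E(1) finA neA by (simp add: card_gt_0_iff)
  have RMb: "RM k i1 \<le> C * (real k + 1) ^ m * \<rho>m ^ k" for k
  proof -
    have "RM k i1 \<le> (\<Sum>j\<in>AA. E * (real k + 1) ^ m * \<rho>m ^ k)"
      unfolding RM_def m_def using E(2)[OF i1(1)] by (intro sum_mono) (meson abs_ge_self order_trans)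
    also have "\<dots> = C * (real k + 1) ^ m * \<rho>m ^ k" by (simp add: C_def)
    finally show ?thesis .
  qed
  have main: "\<rho>w ^ k \<le> C * (real k + 1) ^ m * \<rho>m ^ k * p k" for k
  proof -
    have "\<rho>w ^ k \<le> RW k i1" using i1(2)[of k] c(2) by simp
    also have "\<dots> \<le> RM k i1 * P k i1" by (rule RW_le[OF i1(1)])
    also have "\<dots> \<le> (C * (real k + 1) ^ m * \<rho>m ^ k) * p k"
    proof (rule mult_mono)
      show "RM k i1 \<le> C * (real k + 1) ^ m * \<rho>m ^ k" by (rule RMb)
      show "P k i1 \<le> p k" by (rule P_le_p[OF i1(1)])
      show "0 \<le> C * (real k + 1) ^ m * \<rho>m ^ k" using C0 m0 by simp
      show "0 \<le> P k i1" using P_ge1[OF i1(1), of k] by linarith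
    qed
    finally show ?thesis .
  qed
  have bnd: "log 2 \<rho>w - log 2 \<rho>m - (log 2 C + real m * log 2 (real k + 1)) / real k \<le> a k / real k"
    if k: "k \<ge> 1" for k
  proof -
    have pos: "C * (real k + 1) ^ m * \<rho>m ^ k > 0" using C0 m0 by simp
    have "real k * log 2 \<rho>w = log 2 (\<rho>w ^ k)" using w0 by (simp add: log_nat_power)
    also have "\<dots> \<le> log 2 (C * (real k + 1) ^ m * \<rho>m ^ k * p k)"
      using main[of k] w0 pos p_pos[of k] by (subst log_le_cancel_iff) auto
    also have "\<dots> = log 2 (C * (real k + 1) ^ m * \<rho>m ^ k) + a k"
    proof -
      have Xne: "C * (real k + 1) ^ m * \<rho>m ^ k \<noteq> 0" using pos by linarith
      have pne: "p k \<noteq> 0" using p_pos[of k] by linarith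
      show ?thesis unfolding a_def log_mult if_P[OF conjI[OF Xne pne]] ..
    qed
    also have "\<dots> = log 2 C + real m * log 2 (real k + 1) + real k * log 2 \<rho>m + a k"
      by (simp only: log_bound[OF C0 m0])
    finally have ineq: "real k * log 2 \<rho>w \<le> log 2 C + real m * log 2 (real k + 1) + real k * log 2 \<rho>m + a k" .
    have kp: "real k > 0" using k by simp
    have "real k * (log 2 \<rho>w - log 2 \<rho>m) - (log 2 C + real m * log 2 (real k + 1)) \<le> a k"
      using ineq by (simp add: algebra_simps)
    then have "(real k * (log 2 \<rho>w - log 2 \<rho>m) - (log 2 C + real m * log 2 (real k + 1))) / real k \<le> a k / real k"
      by (rule divide_right_mono) simp
    also have "(real k * (log 2 \<rho>w - log 2 \<rho>m) - (log 2 C + real m * log 2 (real k + 1))) / real k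
        = log 2 \<rho>w - log 2 \<rho>m - (log 2 C + real m * log 2 (real k + 1)) / real k"
      using kp by (simp add: diff_divide_distrib)
    finally show ?thesis .
  qed
  have lim: "(\<lambda>k. log 2 \<rho>w - log 2 \<rho>m - (log 2 C + real m * log 2 (real k + 1)) / real k) \<longlonglongrightarrow> log 2 \<rho>w - log 2 \<rho>m - 0"
    by (intro tendsto_diff tendsto_const glim)
  have "log 2 \<rho>w - log 2 \<rho>m - 0 \<le> L"
    by (rule tendsto_le[OF trivial_limit_sequentially a_lim lim])
       (use bnd in \<open>auto simp: eventually_sequentially intro!: exI[of _ 1]\<close>)
  then show ?thesis unfolding \<rho>w_def \<rho>m_def by simp
qed

theorem main:
  "convergent (h_inv_seq F Q AA G)
    \<and> log 2 (spectral_radius AA (wadj_matrix F AA G)) - log 2 (spectral_radius AA (adj_matrix F G))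
        \<le> h_inv F Q AA G
    \<and> h_inv F Q AA G \<le> min (log 2 (max_norm AA (wadj_matrix F AA G)))
                             (log 2 (spectral_radius AA (wadj_matrix F AA G)))
    \<and> (spectral_radius AA (adj_matrix F G) = 1 \<longrightarrow>
        h_inv F Q AA G = log 2 (spectral_radius AA (wadj_matrix F AA G)))"
proof (intro conjI impI)
  show "convergent (h_inv_seq F Q AA G)" using h_lim by (rule convergentI)
  show "log 2 (spectral_radius AA Wm) - log 2 (spectral_radius AA Mm) \<le> h_inv F Q AA G"
    unfolding h_inv_L by (rule bound_lower)
  show "h_inv F Q AA G \<le> min (log 2 (max_norm AA Wm)) (log 2 (spectral_radius AA Wm))"
    unfolding h_inv_L using bound_maxnorm bound_rhoW by simp
  assume "spectral_radius AA Mm = 1"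
  then show "h_inv F Q AA G = log 2 (spectral_radius AA Wm)"
    unfolding h_inv_L using bound_lower bound_rhoW by simp
qed

end

theorem theorem3p6:
  fixes F :: "'x \<Rightarrow> 'u \<Rightarrow> 'x set" and Q :: "'x set"
    and \<A> :: "'x set set" and G :: "'x set \<Rightarrow> 'u"
  assumes F_ne: "\<And>x u. F x u \<noteq> {}"
    and Q_ne: "Q \<noteq> {}"
    and qip: "quasi_invariant_partition F Q \<A> G"
  shows "convergent (h_inv_seq F Q \<A> G)
    \<and> log 2 (spectral_radius \<A> (wadj_matrix F \<A> G)) - log 2 (spectral_radius \<A> (adj_matrix F G))
        \<le> h_inv F Q \<A> G
    \<and> h_inv F Q \<A> G \<le> min (log 2 (max_norm \<A> (wadj_matrix F \<A> G)))
                             (log 2 (spectral_radius \<A> (wadj_matrix F \<A> G)))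
    \<and> (spectral_radius \<A> (adj_matrix F G) = 1 \<longrightarrow>
        h_inv F Q \<A> G = log 2 (spectral_radius \<A> (wadj_matrix F \<A> G)))"
proof -
  interpret qsys F Q \<A> G using F_ne Q_ne qip by unfold_locales auto
  show ?thesis by (rule main)
qed

end
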